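(* For every $\varepsilon>0$ there exists a convex polygon $C$ in the plane such that $C$ has a unique minimum-area enclosing rectangle $R_A$ and a unique minimum-perimeter enclosing rectangle $R_P$, and the orientations of $R_A$ and $R_P$ differ by an angle greater than $90^\circ-\varepsilon$.
   Context: For a convex region $C$ in the plane, an enclosing rectangle of $C$ is a rectangle (of arbitrary position and rotation) containing $C$. A minimum-area (resp. minimum-perimeter) enclosing rectangle is an enclosing rectangle of least area (resp. least perimeter) among all enclosing rectangles of $C$. The orientation of a rectangle is the direction of the line containing one of its longer sides. The difference in orientation of two rectangles is the (unsigned) angle in $[0^\circ,90^\circ]$ between these two lines. *)

theory Defs
  imports "HOL-Analysis.Analysis"
begin

text \<open>The plane is modelled by the complex numbers.  A (closed, non-degenerate)
rectangle with corner c, rotation angle th and side lengths a (along cis th)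
and b (along i * cis th).\<close>

definition rect_set :: "complex \<Rightarrow> real \<Rightarrow> real \<Rightarrow> real \<Rightarrow> complex set" where
  "rect_set c th a b =
     {c + of_real s * cis th + of_real t * (\<i> * cis th) | s t. 0 \<le> s \<and> s \<le> a \<and> 0 \<le> t \<and> t \<le> b}"

definition is_rectangle :: "complex set \<Rightarrow> bool" where
  "is_rectangle R \<longleftrightarrow> (\<exists>c th a b. 0 < a \<and> 0 < b \<and> R = rect_set c th a b)"

definition rect_area :: "complex set \<Rightarrow> real" where
  "rect_area R = (THE A. \<exists>c th a b. 0 < a \<and> 0 < b \<and> R = rect_set c th a b \<and> A = a * b)"

definition rect_perimeter :: "complex set \<Rightarrow> real" where
  "rect_perimeter R = (THE p. \<exists>c th a b. 0 < a \<and> 0 < b \<and> R = rect_set c th a b \<and> p = 2 * (a + b))"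

definition rect_orientation :: "complex set \<Rightarrow> complex \<Rightarrow> bool" where
  "rect_orientation R d \<longleftrightarrow>
     (\<exists>c th a b. 0 < b \<and> b \<le> a \<and> R = rect_set c th a b \<and> d = cis th)"

text \<open>Unsigned angle in [0, pi/2] between lines with unit directions d1 d2.\<close>
definition line_angle :: "complex \<Rightarrow> complex \<Rightarrow> real" where
  "line_angle d1 d2 = arccos \<bar>d1 \<bullet> d2\<bar>"

definition convex_polygon :: "complex set \<Rightarrow> bool" where
  "convex_polygon C \<longleftrightarrow> (\<exists>P. finite P \<and> C = convex hull P) \<and> interior C \<noteq> {}"

definition enclosing_rectangle :: "complex set \<Rightarrow> complex set \<Rightarrow> bool" where
  "enclosing_rectangle C R \<longleftrightarrow> is_rectangle R \<and> C \<subseteq> R"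

definition min_area_rect :: "complex set \<Rightarrow> complex set \<Rightarrow> bool" where
  "min_area_rect C R \<longleftrightarrow> enclosing_rectangle C R \<and>
     (\<forall>R'. enclosing_rectangle C R' \<longrightarrow> rect_area R \<le> rect_area R')"

definition min_perimeter_rect :: "complex set \<Rightarrow> complex set \<Rightarrow> bool" where
  "min_perimeter_rect C R \<longleftrightarrow> enclosing_rectangle C R \<and>
     (\<forall>R'. enclosing_rectangle C R' \<longrightarrow> rect_perimeter R \<le> rect_perimeter R')"

end

theory Submission
  imports Defs
begin

lemma cis_inner_self: "cis th \<bullet> cis th = 1"
  by (simp add: inner_complex_def flip: power2_eq_square)
lemma icis_inner_self: "(\<i> * cis th) \<bullet> (\<i> * cis th) = 1"
  by (simp add: inner_complex_def flip: power2_eq_square)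
lemma icis_inner_cis: "(\<i> * cis th) \<bullet> cis th = 0"
  by (simp add: inner_complex_def)
lemma cis_inner_icis: "cis th \<bullet> (\<i> * cis th) = 0"
  by (simp add: inner_complex_def)

lemma decomp: "w = of_real (w \<bullet> d) * d + of_real (w \<bullet> (\<i> * d)) * (\<i> * d)" if "norm d = 1" for w d :: complex
proof -
  have "(Re d)^2 + (Im d)^2 = 1" using that by (simp add: cmod_def)
  then show ?thesis
    by (intro complex_eqI; simp add: inner_complex_def algebra_simps power2_eq_square; algebra)
qed

lemma inner_ofreal_mult_left: "(of_real r * x) \<bullet> y = r * (x \<bullet> y)" for x y :: complex
  by (simp add: inner_complex_def algebra_simps)

lemma rect_char:
  "rect_set c th a b = {z. 0 \<le> (z-c) \<bullet> cis th \<and> (z-c) \<bullet> cis th \<le> a \<and>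
      0 \<le> (z-c) \<bullet> (\<i> * cis th) \<and> (z-c) \<bullet> (\<i> * cis th) \<le> b}"
proof (rule set_eqI, rule iffI)
  fix z assume "z \<in> rect_set c th a b"
  then obtain s t where st: "0 \<le> s" "s \<le> a" "0 \<le> t" "t \<le> b"
    and z: "z = c + of_real s * cis th + of_real t * (\<i> * cis th)"
    unfolding rect_set_def by blast
  have zc: "z - c = of_real s * cis th + of_real t * (\<i> * cis th)" using z by simp
  have e1: "(z-c) \<bullet> cis th = s" unfolding zc
    by (simp add: inner_add_left inner_ofreal_mult_left cis_inner_self icis_inner_cis)
  have e2: "(z-c) \<bullet> (\<i> * cis th) = t" unfolding zc
    by (simp add: inner_add_left inner_ofreal_mult_left icis_inner_self cis_inner_icis)
  show "z \<in> {z. 0 \<le> (z-c) \<bullet> cis th \<and> (z-c) \<bullet> cis th \<le> a \<and>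
      0 \<le> (z-c) \<bullet> (\<i> * cis th) \<and> (z-c) \<bullet> (\<i> * cis th) \<le> b}"
    using e1 e2 st by simp
next
  fix z assume "z \<in> {z. 0 \<le> (z-c) \<bullet> cis th \<and> (z-c) \<bullet> cis th \<le> a \<and>
      0 \<le> (z-c) \<bullet> (\<i> * cis th) \<and> (z-c) \<bullet> (\<i> * cis th) \<le> b}"
  then have h: "0 \<le> (z-c) \<bullet> cis th" "(z-c) \<bullet> cis th \<le> a"
      "0 \<le> (z-c) \<bullet> (\<i> * cis th)" "(z-c) \<bullet> (\<i> * cis th) \<le> b" by auto
  have "z - c = of_real ((z-c) \<bullet> cis th) * cis th + of_real ((z-c) \<bullet> (\<i> * cis th)) * (\<i> * cis th)"
    by (rule decomp) simp
  then have "z = c + of_real ((z-c) \<bullet> cis th) * cis th + of_real ((z-c) \<bullet> (\<i> * cis th)) * (\<i> * cis th)"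
    by (simp add: algebra_simps)
  then show "z \<in> rect_set c th a b" unfolding rect_set_def using h by blast
qed

lemma rect_width:
  assumes "z1 \<in> rect_set c th a b" "z2 \<in> rect_set c th a b"
  shows "\<bar>(z1 - z2) \<bullet> cis th\<bar> \<le> a" "\<bar>(z1 - z2) \<bullet> (\<i> * cis th)\<bar> \<le> b"
proof -
  have "z1 - z2 = (z1 - c) - (z2 - c)" by simp
  then have e: "(z1 - z2) \<bullet> w = (z1 - c) \<bullet> w - (z2 - c) \<bullet> w" for w
    by (simp add: inner_diff_left)
  show "\<bar>(z1 - z2) \<bullet> cis th\<bar> \<le> a" "\<bar>(z1 - z2) \<bullet> (\<i> * cis th)\<bar> \<le> b"
    using assms unfolding rect_char e by auto
qed

lemma corner_in: "0 \<le> s \<Longrightarrow> s \<le> a \<Longrightarrow> 0 \<le> t \<Longrightarrow> t \<le> b \<Longrightarrow>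
   c + of_real s * cis th + of_real t * (\<i> * cis th) \<in> rect_set c th a b"
  unfolding rect_set_def by blast

lemma abs_sum_le: "0 \<le> a \<Longrightarrow> 0 \<le> b \<Longrightarrow> \<bar>a*X+b*Y\<bar> \<le> m \<Longrightarrow> \<bar>a*X-b*Y\<bar> \<le> m \<Longrightarrow> a*\<bar>X\<bar>+b*\<bar>Y\<bar> \<le> m"
  for a b X Y m :: real
proof -
  assume h: "0 \<le> a" "0 \<le> b" "\<bar>a*X+b*Y\<bar> \<le> m" "\<bar>a*X-b*Y\<bar> \<le> m"
  have "\<bar>a*X\<bar> + \<bar>b*Y\<bar> \<le> m" using h(3,4) by arith
  then show ?thesis using h(1,2) by (simp add: abs_mult)
qed

lemma rect_params:
  assumes "0 < a" "0 < b" "0 < a'" "0 < b'" "rect_set c th a b = rect_set c' th' a' b'"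
  shows "(a = a' \<and> b = b') \<or> (a = b' \<and> b = a')"
proof -
  define d where "d = cis th"
  define e where "e = cis th'"
  define X where "X = d \<bullet> e"
  define Y where "Y = (\<i> * d) \<bullet> e"
  have XY: "X^2 + Y^2 = 1"
  proof -
    have "(cos th)^2 + (sin th)^2 = 1" "(cos th')^2 + (sin th')^2 = 1" by simp_all
    then show ?thesis unfolding X_def Y_def d_def e_def inner_complex_def
      by (simp add: power2_eq_square; algebra)
  qed
  have Y1: "(\<i> * e) \<bullet> d = - Y" unfolding Y_def inner_complex_def by simp
  have X1: "(\<i> * d) \<bullet> (\<i> * e) = X" unfolding X_def inner_complex_def by simp
  have Y2: "d \<bullet> (\<i> * e) = - Y" unfolding Y_def inner_complex_def by simp
  have X2: "e \<bullet> d = X" unfolding X_def by (simp add: inner_commute)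
  have X3: "(\<i> * e) \<bullet> (\<i> * d) = X" unfolding X_def inner_complex_def by simp
  have Y3: "e \<bullet> (\<i> * d) = Y" unfolding Y_def by (simp add: inner_commute)
  let ?R = "rect_set c th a b"
  have c1: "c + of_real a * d + of_real b * (\<i> * d) \<in> ?R" "c \<in> ?R"
     "c + of_real a * d \<in> ?R" "c + of_real b * (\<i> * d) \<in> ?R"
    using corner_in[of 0 a 0 b c th] corner_in[of a a b b c th] corner_in[of a a 0 b c th]
      corner_in[of 0 a b b c th] assms unfolding d_def by auto
  have c2: "c' + of_real a' * e + of_real b' * (\<i> * e) \<in> ?R" "c' \<in> ?R"
     "c' + of_real a' * e \<in> ?R" "c' + of_real b' * (\<i> * e) \<in> ?R"
    using corner_in[of 0 a' 0 b' c' th'] corner_in[of a' a' b' b' c' th'] corner_in[of a' a' 0 b' c' th']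
      corner_in[of 0 a' b' b' c' th'] assms unfolding e_def by auto
  have c1': "c + of_real a * d + of_real b * (\<i> * d) \<in> rect_set c' th' a' b'" "c \<in> rect_set c' th' a' b'"
     "c + of_real a * d \<in> rect_set c' th' a' b'" "c + of_real b * (\<i> * d) \<in> rect_set c' th' a' b'"
    using c1 assms(5) by auto
  have w1: "\<bar>(of_real a * d + of_real b * (\<i> * d)) \<bullet> e\<bar> \<le> a'"
     "\<bar>(of_real a * d - of_real b * (\<i> * d)) \<bullet> e\<bar> \<le> a'"
     "\<bar>(of_real a * d + of_real b * (\<i> * d)) \<bullet> (\<i> * e)\<bar> \<le> b'"
     "\<bar>(of_real a * d - of_real b * (\<i> * d)) \<bullet> (\<i> * e)\<bar> \<le> b'"
    using rect_width[of _ c' th' a' b', OF c1'(1) c1'(2)] rect_width[of _ c' th' a' b', OF c1'(3) c1'(4)]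
    assms(5) unfolding e_def by (simp_all add: algebra_simps)
  have w2: "\<bar>(of_real a' * e + of_real b' * (\<i> * e)) \<bullet> d\<bar> \<le> a"
     "\<bar>(of_real a' * e - of_real b' * (\<i> * e)) \<bullet> d\<bar> \<le> a"
     "\<bar>(of_real a' * e + of_real b' * (\<i> * e)) \<bullet> (\<i> * d)\<bar> \<le> b"
     "\<bar>(of_real a' * e - of_real b' * (\<i> * e)) \<bullet> (\<i> * d)\<bar> \<le> b"
    using rect_width[of _ c th a b, OF c2(1) c2(2)] rect_width[of _ c th a b, OF c2(3) c2(4)]
    unfolding d_def by (simp_all add: algebra_simps)
  have w1': "\<bar>a * X + b * Y\<bar> \<le> a'" "\<bar>a * X - b * Y\<bar> \<le> a'"
     "\<bar>a * (- Y) + b * X\<bar> \<le> b'" "\<bar>a * (- Y) - b * X\<bar> \<le> b'"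
    using w1 by (simp_all add: inner_add_left inner_diff_left inner_ofreal_mult_left X_def[symmetric] Y_def[symmetric] Y2 X1)
  have w2': "\<bar>a' * X + b' * (- Y)\<bar> \<le> a" "\<bar>a' * X - b' * (- Y)\<bar> \<le> a"
     "\<bar>a' * Y + b' * X\<bar> \<le> b" "\<bar>a' * Y - b' * X\<bar> \<le> b"
    using w2 by (simp_all add: inner_add_left inner_diff_left inner_ofreal_mult_left X2 Y1 Y3 X3)
  have A1: "a' \<ge> a * \<bar>X\<bar> + b * \<bar>Y\<bar>" "b' \<ge> a * \<bar>Y\<bar> + b * \<bar>X\<bar>"
       "a \<ge> a' * \<bar>X\<bar> + b' * \<bar>Y\<bar>" "b \<ge> a' * \<bar>Y\<bar> + b' * \<bar>X\<bar>"
    using abs_sum_le[OF _ _ w1'(1) w1'(2)] abs_sum_le[of a b "-Y" X b', OF _ _ w1'(3) w1'(4)]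
      abs_sum_le[of a' b' X "-Y" a, OF _ _ w2'(1) w2'(2)] abs_sum_le[of a' b' Y X b, OF _ _ w2'(3) w2'(4)]
      assms(1-4) by (simp_all add: algebra_simps)
  define m where "m = \<bar>X\<bar> + \<bar>Y\<bar>"
  have m0: "m \<ge> 0" unfolding m_def by simp
  have m2: "m^2 = 1 + 2 * \<bar>X\<bar> * \<bar>Y\<bar>" unfolding m_def power2_sum power2_abs using XY by simp
  have m1: "m \<ge> 1"
  proof (rule ccontr)
    assume "\<not> m \<ge> 1"
    then have "m * m < 1 * 1" using m0 by (intro mult_strict_mono') auto
    moreover have "m * m \<ge> 1" using m2 by (simp add: power2_eq_square)
    ultimately show False by simp
  qed
  have s1: "a + b \<ge> (a' + b') * m" "a' + b' \<ge> (a + b) * m"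
    using A1 unfolding m_def by (simp_all add: algebra_simps)
  have "a + b \<ge> (a + b) * m * m"
  proof -
    have "(a' + b') * m \<ge> (a + b) * m * m" using s1(2) m0 by (simp add: mult_right_mono)
    then show ?thesis using s1(1) by linarith
  qed
  then have "m * m \<le> 1" using assms(1,2) by (simp add: mult.assoc)
  then have "2 * \<bar>X\<bar> * \<bar>Y\<bar> \<le> 0" using m2 by (simp add: power2_eq_square)
  then have "\<bar>X\<bar> * \<bar>Y\<bar> \<le> 0" by simp
  then have "\<bar>X\<bar> * \<bar>Y\<bar> = 0" by (meson antisym abs_ge_zero mult_nonneg_nonneg)
  then have "X = 0 \<or> Y = 0" by (metis abs_eq_0 mult_eq_0_iff)
  then show ?thesis
  proof
    assume "X = 0"
    then have "Y^2 = 1" using XY by simp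
    then have "\<bar>Y\<bar> = 1" using abs_square_eq_1 by blast
    then have "a' \<ge> b" "b' \<ge> a" "a \<ge> b'" "b \<ge> a'" using A1 \<open>X = 0\<close> by simp_all
    then show ?thesis by linarith
  next
    assume "Y = 0"
    then have "X^2 = 1" using XY by simp
    then have "\<bar>X\<bar> = 1" using abs_square_eq_1 by blast
    then have "a' \<ge> a" "b' \<ge> b" "a \<ge> a'" "b \<ge> b'" using A1 \<open>Y = 0\<close> by simp_all
    then show ?thesis by linarith
  qed
qed

lemma rect_area_eq: "0 < a \<Longrightarrow> 0 < b \<Longrightarrow> rect_area (rect_set c th a b) = a * b"
  unfolding rect_area_def
proof (rule the_equality)
  assume "0 < a" "0 < b"
  then show "\<exists>c' th' a' b'. 0 < a' \<and> 0 < b' \<and> rect_set c th a b = rect_set c' th' a' b' \<and> a * b = a' * b'"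
    by blast
  fix A assume "0 < a" "0 < b" "\<exists>c' th' a' b'. 0 < a' \<and> 0 < b' \<and> rect_set c th a b = rect_set c' th' a' b' \<and> A = a' * b'"
  then obtain c' th' a' b' where h: "0 < a'" "0 < b'" "rect_set c th a b = rect_set c' th' a' b'" "A = a' * b'"
    by blast
  from rect_params[OF \<open>0<a\<close> \<open>0<b\<close> h(1,2,3)] h(4) show "A = a * b" by auto
qed

lemma rect_perimeter_eq: "0 < a \<Longrightarrow> 0 < b \<Longrightarrow> rect_perimeter (rect_set c th a b) = 2 * (a + b)"
  unfolding rect_perimeter_def
proof (rule the_equality)
  assume "0 < a" "0 < b"
  then show "\<exists>c' th' a' b'. 0 < a' \<and> 0 < b' \<and> rect_set c th a b = rect_set c' th' a' b' \<and> 2 * (a + b) = 2 * (a' + b')"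
    by blast
  fix A assume "0 < a" "0 < b" "\<exists>c' th' a' b'. 0 < a' \<and> 0 < b' \<and> rect_set c th a b = rect_set c' th' a' b' \<and> A = 2 * (a' + b')"
  then obtain c' th' a' b' where h: "0 < a'" "0 < b'" "rect_set c th a b = rect_set c' th' a' b'" "A = 2 * (a' + b')"
    by blast
  from rect_params[OF \<open>0<a\<close> \<open>0<b\<close> h(1,2,3)] h(4) show "A = 2 * (a + b)" by auto
qed

lemma rect_sym:
  assumes R: "R = rect_set c th a' b'"
    and v: "v \<in> R" "- v \<in> R" "\<bar>2 * (v \<bullet> cis th)\<bar> = a'"
    and w: "w \<in> R" "- w \<in> R" "\<bar>2 * (w \<bullet> (\<i> * cis th))\<bar> = b'"
  shows "R = {z. \<bar>z \<bullet> cis th\<bar> \<le> a' / 2 \<and> \<bar>z \<bullet> (\<i> * cis th)\<bar> \<le> b' / 2}"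
proof -
  let ?d = "cis th" and ?e = "\<i> * cis th"
  have ineq: "(z - c) \<bullet> x = z \<bullet> x - c \<bullet> x" for z x :: complex by (simp add: inner_diff_left)
  have vm: "(- v) \<bullet> x = - (v \<bullet> x)" for x :: complex by simp
  have hv: "0 \<le> v \<bullet> ?d - c \<bullet> ?d" "v \<bullet> ?d - c \<bullet> ?d \<le> a'" "0 \<le> - (v \<bullet> ?d) - c \<bullet> ?d" "- (v \<bullet> ?d) - c \<bullet> ?d \<le> a'"
    using v(1,2) unfolding R rect_char ineq vm by auto
  have hw: "0 \<le> w \<bullet> ?e - c \<bullet> ?e" "w \<bullet> ?e - c \<bullet> ?e \<le> b'" "0 \<le> - (w \<bullet> ?e) - c \<bullet> ?e" "- (w \<bullet> ?e) - c \<bullet> ?e \<le> b'"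
    using w(1,2) unfolding R rect_char ineq vm by auto
  have cd: "c \<bullet> ?d = - a' / 2" using hv v(3) by (auto simp: abs_if split: if_splits)
  have ce: "c \<bullet> ?e = - b' / 2" using hw w(3) by (auto simp: abs_if split: if_splits)
  show ?thesis unfolding R rect_char ineq cd ce by (auto simp: abs_le_iff)
qed

lemma box_convex: "convex {z::complex. \<bar>z \<bullet> x\<bar> \<le> \<alpha> \<and> \<bar>z \<bullet> y\<bar> \<le> \<beta>}"
proof -
  have "{z::complex. \<bar>z \<bullet> x\<bar> \<le> \<alpha> \<and> \<bar>z \<bullet> y\<bar> \<le> \<beta>} =
    {z. inner x z \<le> \<alpha>} \<inter> {z. inner (-x) z \<le> \<alpha>} \<inter> {z. inner y z \<le> \<beta>} \<inter> {z. inner (-y) z \<le> \<beta>}"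
    (is "?A = _") by (auto simp: abs_le_iff inner_commute)
  show ?thesis unfolding \<open>?A = _\<close> by (intro convex_Int convex_halfspace_le)
qed

lemma quadrant: "d \<noteq> 0 \<Longrightarrow> \<exists>e\<in>{d, \<i>*d, -d, -(\<i>*d)}. Re e > 0 \<and> Im e \<ge> 0" for d :: complex
proof -
  assume "d \<noteq> 0"
  then have "Re d \<noteq> 0 \<or> Im d \<noteq> 0" by (simp add: complex_eq_iff)
  show ?thesis
  proof (cases "Im d > 0")
    case True
    then show ?thesis by (cases "Re d > 0") auto
  next
    case False
    show ?thesis
    proof (cases "Im d = 0")
      case True
      then show ?thesis using \<open>Re d \<noteq> 0 \<or> Im d \<noteq> 0\<close> by (cases "Re d > 0") auto
    next
      case False
      then show ?thesis using \<open>\<not> Im d > 0\<close> by (cases "Re d \<ge> 0") auto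
    qed
  qed
qed

locale config =
  fixes a b p q C S \<delta> :: real and R2 T0 T1 R1 :: complex
  assumes pos: "0 < a" "0 < b" "0 < p" "0 < q"
    and ab_lt: "a * b < p * q" and sum_lt: "p + q < a + b"
    and ba: "b < a" and pq: "p < q"
    and N3: "2*a*b*C \<le> a*q + p*b" and N4: "2*a*b*S \<le> p*a + b*q"
    and P1: "(p+q)*C \<le> a+b" and P2: "(p+q)*S \<le> a+b"
    and CS: "C = cos \<delta>" "S = sin \<delta>" "0 < \<delta>" "\<delta> < pi/2"
    and E1: "Re R2 = a/2" "Re R2*C + Im R2*S = p/2"
    and E2: "Im T0 = b/2" "- Re T0*S + Im T0*C = q/2"
    and E3: "Im T1 = b/2" "Re T1*C + Im T1*S = p/2"
    and E4: "Re R1 = a/2" "- Re R1*S + Im R1*C = - q/2"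
    and M: "\<And>v. v \<in> {R2, T0, T1, R1} \<Longrightarrow> \<bar>Re v\<bar> \<le> a/2 \<and> \<bar>Im v\<bar> \<le> b/2 \<and>
             \<bar>Re v * C + Im v * S\<bar> \<le> p/2 \<and> \<bar>- Re v * S + Im v * C\<bar> \<le> q/2"
    and cross: "Im R2 * Re T0 < Re R2 * Im T0"
begin

lemma C_pos: "C > 0" using CS by (simp add: cos_gt_zero)
lemma S_pos: "S > 0" using CS by (simp add: sin_gt_zero)
lemma CS1: "C^2 + S^2 = 1" using CS by simp

definition u where "u = cis \<delta>"
lemma u_sel: "Re u = C" "Im u = S" unfolding u_def using CS by simp_all
lemma inner_u: "z \<bullet> u = Re z * C + Im z * S" by (simp add: inner_complex_def u_sel)
lemma inner_iu: "z \<bullet> (\<i> * u) = - Re z * S + Im z * C" by (simp add: inner_complex_def u_sel)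

definition pts where "pts = {R2, -R2, T0, -T0, T1, -T1, R1, -R1}"
definition CC where "CC = convex hull pts"
definition h :: "complex \<Rightarrow> real" where
  "h d = max (max \<bar>2 * (R2 \<bullet> d)\<bar> \<bar>2 * (T0 \<bullet> d)\<bar>) (max \<bar>2 * (T1 \<bullet> d)\<bar> \<bar>2 * (R1 \<bullet> d)\<bar>)"
definition RA where "RA = rect_set (Complex (-a/2) (-b/2)) 0 a b"
definition RP where "RP = rect_set (- (of_real (p/2)) * u - of_real (q/2) * (\<i> * u)) \<delta> p q"

lemma RA_eq: "RA = {z. \<bar>Re z\<bar> \<le> a/2 \<and> \<bar>Im z\<bar> \<le> b/2}"
  unfolding RA_def rect_char by (auto simp: inner_complex_def abs_le_iff)

lemma RP_eq: "RP = {z. \<bar>z \<bullet> u\<bar> \<le> p/2 \<and> \<bar>z \<bullet> (\<i> * u)\<bar> \<le> q/2}"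
proof -
  have e1: "(z - (- (of_real (p/2)) * u - of_real (q/2) * (\<i> * u))) \<bullet> u = z \<bullet> u + p/2" for z
    using CS1 by (simp add: inner_diff_left inner_add_left inner_u u_sel algebra_simps power2_eq_square) algebra
  have e2: "(z - (- (of_real (p/2)) * u - of_real (q/2) * (\<i> * u))) \<bullet> (\<i> * u) = z \<bullet> (\<i> * u) + q/2" for z
    using CS1 by (simp add: inner_diff_left inner_add_left inner_iu u_sel algebra_simps power2_eq_square) algebra
  show ?thesis unfolding RP_def rect_char u_def[symmetric] e1 e2 by (auto simp: abs_le_iff)
qed

lemma pts_RA: "pts \<subseteq> RA" using M[of R2] M[of T0] M[of T1] M[of R1] unfolding pts_def RA_eq by auto
lemma pt_RP: "v \<in> {R2, T0, T1, R1} \<Longrightarrow> v \<in> RP \<and> - v \<in> RP"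
proof -
  assume v: "v \<in> {R2, T0, T1, R1}"
  have "\<bar>v \<bullet> u\<bar> \<le> p/2" "\<bar>v \<bullet> (\<i> * u)\<bar> \<le> q/2"
    using M[OF v] unfolding inner_u inner_iu by simp_all
  then show ?thesis unfolding RP_eq by simp
qed
lemma pts_RP: "pts \<subseteq> RP" using pt_RP unfolding pts_def by auto

lemma CC_RA: "CC \<subseteq> RA"
  unfolding CC_def by (rule hull_minimal[OF pts_RA]) (simp add: RA_eq box_convex[of 1 "a/2" \<i> "b/2", simplified inner_complex_def, simplified])

lemma CC_RP: "CC \<subseteq> RP"
  unfolding CC_def by (rule hull_minimal[OF pts_RP]) (simp only: RP_eq box_convex)

lemma pts_CC: "v \<in> {R2, T0, T1, R1} \<Longrightarrow> v \<in> CC \<and> - v \<in> CC"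
  unfolding CC_def pts_def by (auto intro: hull_inc)

lemma h_bound:
  assumes "CC \<subseteq> rect_set c th a' b'"
  shows "h (cis th) \<le> a'" "h (\<i> * cis th) \<le> b'"
proof -
  have w: "\<bar>2 * (v \<bullet> cis th)\<bar> \<le> a' \<and> \<bar>2 * (v \<bullet> (\<i> * cis th))\<bar> \<le> b'" if "v \<in> {R2, T0, T1, R1}" for v
  proof -
    have "v \<in> rect_set c th a' b'" "- v \<in> rect_set c th a' b'" using pts_CC[OF that] assms by auto
    from rect_width[OF this] have "\<bar>(v - - v) \<bullet> cis th\<bar> \<le> a'" "\<bar>(v - - v) \<bullet> (\<i> * cis th)\<bar> \<le> b'" by auto
    moreover have "(v - - v) \<bullet> x = 2 * (v \<bullet> x)" for x by (simp add: inner_complex_def)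
    ultimately show ?thesis by simp
  qed
  show "h (cis th) \<le> a'" "h (\<i> * cis th) \<le> b'" unfolding h_def using w by auto
qed

lemma h_nonneg: "h d \<ge> 0" unfolding h_def by simp
lemma h_neg: "h (- d) = h d" unfolding h_def by simp
lemma h_ii: "h (\<i> * (\<i> * d)) = h d" using h_neg by (simp flip: mult.assoc)

lemma h_attained: "\<exists>v\<in>{R2, T0, T1, R1}. \<bar>2 * (v \<bullet> d)\<bar> = h d"
  unfolding h_def by (auto simp: max_def)

end

lemma sq1: "(l::real)^2 = 1 \<Longrightarrow> 0 \<le> l \<Longrightarrow> l = 1"
  using power2_eq_1_iff[of l] by auto

context config begin

lemma h_ge: "h d \<ge> \<bar>2 * (R2 \<bullet> d)\<bar>" "h d \<ge> \<bar>2 * (T0 \<bullet> d)\<bar>" "h d \<ge> \<bar>2 * (T1 \<bullet> d)\<bar>" "h d \<ge> \<bar>2 * (R1 \<bullet> d)\<bar>"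
  unfolding h_def by (meson max.cobounded1 max.cobounded2 order_trans)+

lemma K0:
  assumes e: "Re e > 0" "Im e \<ge> 0" "norm e = 1"
  shows "a*b \<le> h e * h (\<i>*e) \<and> (h e * h (\<i>*e) \<le> a*b \<longrightarrow> e = 1)"
    "p+q \<le> h e + h (\<i>*e) \<and> (h e + h (\<i>*e) \<le> p+q \<longrightarrow> e = u)"
proof -
  define x where "x = Re e"
  define y where "y = Im e"
  have xy: "x^2 + y^2 = 1" using e(3) unfolding x_def y_def cmod_def
    by (metis real_sqrt_eq_1_iff)
  have Sp: "S > 0" and Cp: "C > 0" using S_pos C_pos .
  have ex: "e = Complex x y" unfolding x_def y_def by simp
  have iR2: "R2 \<bullet> e = Re R2 * x + Im R2 * y" "T0 \<bullet> (\<i>*e) = - Re T0 * y + Im T0 * x"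
     "T1 \<bullet> e = Re T1 * x + Im T1 * y" "R1 \<bullet> (\<i>*e) = - Re R1 * y + Im R1 * x"
    unfolding x_def y_def inner_complex_def by simp_all
  have ab0: "a*b < p*q" "p + q < a + b" using ab_lt sum_lt .
  have sq: "(p+q)^2 < (a+b)^2" using sum_lt pos by (intro power_strict_mono) auto
  have main: "(a*b \<le> h e * h (\<i>*e) \<and> (h e * h (\<i>*e) \<le> a*b \<longrightarrow> e = 1)) \<and>
    (p+q \<le> h e + h (\<i>*e) \<and> (h e + h (\<i>*e) \<le> p+q \<longrightarrow> e = u))"
  proof (cases "y*C \<le> x*S")
    case True
    define l where "l = x - y*C/S"
    define m where "m = y/S"
    have xl: "x = l + m*C" and ym: "y = m*S" unfolding l_def m_def using Sp by (simp_all add: field_simps)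
    have l0: "l \<ge> 0" unfolding l_def using True Sp by (simp add: field_simps)
    have m0: "m \<ge> 0" unfolding m_def using e(2) Sp y_def by simp
    have unit: "l^2 + 2*l*m*C + m^2 = 1" using xy xl ym CS1 by algebra
    define A where "A = l*a + m*p"
    define B where "B = l*b + m*q"
    have fA: "2 * (R2 \<bullet> e) = A" unfolding iR2 A_def using E1 xl ym by algebra
    have fB: "2 * (T0 \<bullet> (\<i>*e)) = B" unfolding iR2 B_def using E2 xl ym by algebra
    have A0: "A \<ge> 0" "B \<ge> 0" unfolding A_def B_def using l0 m0 pos by simp_all
    have hA: "h e \<ge> A" using h_ge(1)[of e] fA by simp
    have hB: "h (\<i>*e) \<ge> B" using h_ge(2)[of "\<i>*e"] fB by simp
    have AB: "A*B = a*b*(l^2 + 2*l*m*C + m^2) + l*m*(a*q+p*b-2*a*b*C) + m^2*(p*q-a*b)"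
      unfolding A_def B_def by (simp add: algebra_simps power2_eq_square)
    have t1: "l*m*(a*q+p*b-2*a*b*C) \<ge> 0" using l0 m0 N3 by simp
    have t2: "m^2*(p*q-a*b) \<ge> 0" using ab_lt by simp
    have hAB: "h e * h (\<i>*e) \<ge> A * B" using hA hB A0 by (intro mult_mono) auto
    have area1: "a*b \<le> h e * h (\<i>*e)" using hAB AB unit t1 t2 by simp
    have area2: "e = 1" if "h e * h (\<i>*e) \<le> a*b"
    proof -
      have "m^2*(p*q-a*b) \<le> 0" using that hAB AB unit t1 by simp
      then have "m = 0" using ab_lt by (simp add: mult_le_0_iff)
      then have "y = 0" "x = l" using ym xl by simp_all
      then have "l^2 = 1" using unit \<open>m = 0\<close> by simp
      then have "x = 1" using sq1 l0 \<open>x = l\<close> by blast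
      then show "e = 1" using ex \<open>y = 0\<close> by (simp add: complex_eq_iff)
    qed
    define L where "L = A + B"
    have L0: "L \<ge> 0" unfolding L_def using A0 by simp
    have LL: "L^2 = (p+q)^2 * (l^2 + 2*l*m*C + m^2) + l^2*((a+b)^2-(p+q)^2) + 2*l*m*(p+q)*((a+b)-(p+q)*C)"
      unfolding L_def A_def B_def by (simp add: algebra_simps power2_eq_square)
    have t3: "l^2*((a+b)^2-(p+q)^2) \<ge> 0" using sq by simp
    have t4: "2*l*m*(p+q)*((a+b)-(p+q)*C) \<ge> 0" using l0 m0 pos P1 by simp
    have Lge: "p + q \<le> L"
    proof (rule power2_le_imp_le)
      show "(p+q)^2 \<le> L^2" using LL unit t3 t4 by simp
    qed (rule L0)
    have hL: "h e + h (\<i>*e) \<ge> L" unfolding L_def using hA hB by simp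
    have per2: "e = u" if "h e + h (\<i>*e) \<le> p+q"
    proof -
      have "L \<le> p + q" using that hL by simp
      then have "L^2 \<le> (p+q)^2" using L0 by (intro power_mono) auto
      then have "l^2*((a+b)^2-(p+q)^2) \<le> 0" using LL unit t4 by simp
      then have "l = 0" using sq by (simp add: mult_le_0_iff)
      then have "m^2 = 1" using unit by simp
      then have "m = 1" using sq1 m0 by blast
      then have "x = C" "y = S" using xl ym \<open>l = 0\<close> by simp_all
      then show "e = u" using ex u_sel by (simp add: complex_eq_iff)
    qed
    show ?thesis using area1 area2 Lge hL per2 by auto
  next
    case False
    define l where "l = x/C"
    define m where "m = y - x*S/C"
    have xl: "x = l*C" and ym: "y = l*S + m" unfolding l_def m_def using Cp by (simp_all add: field_simps)
    have l0: "l > 0" unfolding l_def using e(1) Cp x_def by simp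
    have m0: "m \<ge> 0" unfolding m_def using False Cp by (simp add: field_simps)
    have unit: "l^2 + 2*l*m*S + m^2 = 1" using xy xl ym CS1 by algebra
    define A where "A = l*p + m*b"
    define B where "B = l*q + m*a"
    have fA: "2 * (T1 \<bullet> e) = A" unfolding iR2 A_def using E3 xl ym by algebra
    have fB: "2 * (R1 \<bullet> (\<i>*e)) = - B" unfolding iR2 B_def using E4 xl ym by algebra
    have A0: "A \<ge> 0" "B \<ge> 0" unfolding A_def B_def using l0 m0 pos by simp_all
    have hA: "h e \<ge> A" using h_ge(3)[of e] fA by simp
    have hB: "h (\<i>*e) \<ge> B" using h_ge(4)[of "\<i>*e"] fB A0 by simp
    have AB: "A*B = a*b*(l^2 + 2*l*m*S + m^2) + l^2*(p*q-a*b) + l*m*(p*a+b*q-2*a*b*S)"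
      unfolding A_def B_def by (simp add: algebra_simps power2_eq_square)
    have t1: "l*m*(p*a+b*q-2*a*b*S) \<ge> 0" using l0 m0 N4 by simp
    have t2: "l^2*(p*q-a*b) > 0" using ab_lt l0 by simp
    have hAB: "h e * h (\<i>*e) \<ge> A * B" using hA hB A0 by (intro mult_mono) auto
    have area1: "a*b < h e * h (\<i>*e)" using hAB AB unit t1 t2 by simp
    define L where "L = A + B"
    have L0: "L \<ge> 0" unfolding L_def using A0 by simp
    have LL: "L^2 = (p+q)^2 * (l^2 + 2*l*m*S + m^2) + m^2*((a+b)^2-(p+q)^2) + 2*l*m*(p+q)*((a+b)-(p+q)*S)"
      unfolding L_def A_def B_def by (simp add: algebra_simps power2_eq_square)
    have t3: "m^2*((a+b)^2-(p+q)^2) \<ge> 0" using sq by simp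
    have t4: "2*l*m*(p+q)*((a+b)-(p+q)*S) \<ge> 0" using l0 m0 pos P2 by simp
    have Lge: "p + q \<le> L"
    proof (rule power2_le_imp_le)
      show "(p+q)^2 \<le> L^2" using LL unit t3 t4 by simp
    qed (rule L0)
    have hL: "h e + h (\<i>*e) \<ge> L" unfolding L_def using hA hB by simp
    have per2: "e = u" if "h e + h (\<i>*e) \<le> p+q"
    proof -
      have "L \<le> p + q" using that hL by simp
      then have "L^2 \<le> (p+q)^2" using L0 by (intro power_mono) auto
      then have "m^2*((a+b)^2-(p+q)^2) \<le> 0" using LL unit t4 by simp
      then have "m = 0" using sq by (simp add: mult_le_0_iff)
      then have "l^2 = 1" using unit by simp
      then have "l = 1" using sq1 l0 by simp
      then have "x = C" "y = S" using xl ym \<open>m = 0\<close> by simp_all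
      then show "e = u" using ex u_sel by (simp add: complex_eq_iff)
    qed
    show ?thesis using area1 Lge hL per2 by auto
  qed
  then show "a*b \<le> h e * h (\<i>*e) \<and> (h e * h (\<i>*e) \<le> a*b \<longrightarrow> e = 1)"
    "p+q \<le> h e + h (\<i>*e) \<and> (h e + h (\<i>*e) \<le> p+q \<longrightarrow> e = u)" by auto
qed

end

context config begin

lemma transfer_le: "(A::real) \<le> X \<and> (X \<le> A \<longrightarrow> E) \<Longrightarrow> Y = X \<Longrightarrow> (E \<Longrightarrow> G) \<Longrightarrow> A \<le> Y \<and> (Y \<le> A \<longrightarrow> G)"
  by auto

lemma Kfull:
  assumes d: "norm d = 1"
  shows "a*b \<le> h d * h (\<i>*d) \<and> (h d * h (\<i>*d) \<le> a*b \<longrightarrow> d \<in> {1, -1, \<i>, -\<i>})"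
    "p+q \<le> h d + h (\<i>*d) \<and> (h d + h (\<i>*d) \<le> p+q \<longrightarrow> d \<in> {u, -u, \<i>*u, -(\<i>*u)})"
proof -
  have "d \<noteq> 0" using d by auto
  then obtain e where e: "e \<in> {d, \<i>*d, -d, -(\<i>*d)}" "Re e > 0" "Im e \<ge> 0" using quadrant by blast
  have ne: "norm e = 1" using e(1) d by (auto simp: norm_mult)
  note K = K0[OF e(2,3) ne]
  have eqs: "h d * h (\<i>*d) = h e * h (\<i>*e) \<and> h d + h (\<i>*d) = h e + h (\<i>*e)"
    and m: "(e = 1 \<longrightarrow> d \<in> {1, -1, \<i>, -\<i>}) \<and> (e = u \<longrightarrow> d \<in> {u, -u, \<i>*u, -(\<i>*u)})"
  proof -
    consider "e = d" | "e = \<i>*d" | "e = -d" | "e = -(\<i>*d)" using e(1) by blast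
    then have "(h d * h (\<i>*d) = h e * h (\<i>*e) \<and> h d + h (\<i>*d) = h e + h (\<i>*e)) \<and>
       (e = 1 \<longrightarrow> d \<in> {1, -1, \<i>, -\<i>}) \<and> (e = u \<longrightarrow> d \<in> {u, -u, \<i>*u, -(\<i>*u)})"
    proof cases
      case 1 then show ?thesis by simp
    next
      case 2
      have h1: "h e = h (\<i>*d)" "h (\<i>*e) = h d" using 2 h_ii by auto
      have "e = 1 \<Longrightarrow> d = -\<i>" "e = u \<Longrightarrow> d = -(\<i>*u)" using 2 by (auto simp: complex_eq_iff)
      moreover have "h d * h (\<i>*d) = h e * h (\<i>*e)" "h d + h (\<i>*d) = h e + h (\<i>*e)"
        unfolding h1 by (simp_all only: mult.commute add.commute)
      ultimately show ?thesis by simp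
    next
      case 3
      have h1: "h e = h d" "h (\<i>*e) = h (\<i>*d)" using 3 h_neg[of d] h_neg[of "\<i>*d"] by simp_all
      have "e = 1 \<Longrightarrow> d = -1" "e = u \<Longrightarrow> d = -u" using 3 by (metis minus_minus)+
      moreover have "h d * h (\<i>*d) = h e * h (\<i>*e)" "h d + h (\<i>*d) = h e + h (\<i>*e)"
        unfolding h1 by simp_all
      ultimately show ?thesis by simp
    next
      case 4
      have h1: "h e = h (\<i>*d)" "h (\<i>*e) = h d"
        using 4 h_neg[of "\<i>*d"] h_neg[of "\<i>*(\<i>*d)"] h_ii[of d] by simp_all
      have "e = 1 \<Longrightarrow> d = \<i>" "e = u \<Longrightarrow> d = \<i>*u" using 4 by (auto simp: complex_eq_iff)
      moreover have "h d * h (\<i>*d) = h e * h (\<i>*e)" "h d + h (\<i>*d) = h e + h (\<i>*e)"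
        unfolding h1 by (simp_all only: mult.commute add.commute)
      ultimately show ?thesis by simp
    qed
    then show "h d * h (\<i>*d) = h e * h (\<i>*e) \<and> h d + h (\<i>*d) = h e + h (\<i>*e)"
      "(e = 1 \<longrightarrow> d \<in> {1, -1, \<i>, -\<i>}) \<and> (e = u \<longrightarrow> d \<in> {u, -u, \<i>*u, -(\<i>*u)})" by blast+
  qed
  show "a*b \<le> h d * h (\<i>*d) \<and> (h d * h (\<i>*d) \<le> a*b \<longrightarrow> d \<in> {1, -1, \<i>, -\<i>})"
    using transfer_le[OF K(1)] eqs m by blast
  show "p+q \<le> h d + h (\<i>*d) \<and> (h d + h (\<i>*d) \<le> p+q \<longrightarrow> d \<in> {u, -u, \<i>*u, -(\<i>*u)})"
    using transfer_le[OF K(2)] eqs m by blast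
qed

lemma h_1: "h 1 = a"
proof -
  have "\<bar>2 * (v \<bullet> 1)\<bar> \<le> a" if "v \<in> {R2, T0, T1, R1}" for v
  proof -
    have "\<bar>v \<bullet> 1\<bar> * 2 \<le> a" using M[OF that] by (simp add: inner_complex_def)
    then show ?thesis by (simp add: abs_mult)
  qed
  then have "h 1 \<le> a" unfolding h_def by simp
  moreover have "h 1 \<ge> a" using h_ge(1)[of 1] E1 pos by (simp add: inner_complex_def)
  ultimately show ?thesis by simp
qed

lemma h_i: "h \<i> = b"
proof -
  have "\<bar>2 * (v \<bullet> \<i>)\<bar> \<le> b" if "v \<in> {R2, T0, T1, R1}" for v
  proof -
    have "\<bar>v \<bullet> \<i>\<bar> * 2 \<le> b" using M[OF that] by (simp add: inner_complex_def)
    then show ?thesis by (simp add: abs_mult)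
  qed
  then have "h \<i> \<le> b" unfolding h_def by simp
  moreover have "h \<i> \<ge> b" using h_ge(2)[of \<i>] E2 pos by (simp add: inner_complex_def)
  ultimately show ?thesis by simp
qed

lemma h_u: "h u = p"
proof -
  have "\<bar>2 * (v \<bullet> u)\<bar> \<le> p" if "v \<in> {R2, T0, T1, R1}" for v
  proof -
    have "\<bar>v \<bullet> u\<bar> * 2 \<le> p" using M[OF that] unfolding inner_u by simp
    then show ?thesis by (simp add: abs_mult)
  qed
  then have "h u \<le> p" unfolding h_def by simp
  moreover have "2 * (R2 \<bullet> u) = p" using E1(2) unfolding inner_u by simp
  then have "h u \<ge> p" using h_ge(1)[of u] pos by simp
  ultimately show ?thesis by simp
qed

lemma h_iu: "h (\<i>*u) = q"
proof -
  have "\<bar>2 * (v \<bullet> (\<i>*u))\<bar> \<le> q" if "v \<in> {R2, T0, T1, R1}" for v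
  proof -
    have "\<bar>v \<bullet> (\<i>*u)\<bar> * 2 \<le> q" using M[OF that] unfolding inner_iu by simp
    then show ?thesis by (simp add: abs_mult)
  qed
  then have "h (\<i>*u) \<le> q" unfolding h_def by simp
  moreover have "2 * (T0 \<bullet> (\<i>*u)) = q" using E2(2) unfolding inner_iu by simp
  then have "h (\<i>*u) \<ge> q" using h_ge(2)[of "\<i>*u"] pos by simp
  ultimately show ?thesis by simp
qed

lemma enc_bounds:
  assumes "CC \<subseteq> rect_set c th a' b'"
  shows "a*b \<le> a'*b'" "a'*b' \<le> a*b \<Longrightarrow> cis th \<in> {1, -1, \<i>, -\<i>} \<and> a' = h (cis th) \<and> b' = h (\<i> * cis th)"
    "p+q \<le> a'+b'" "a'+b' \<le> p+q \<Longrightarrow> cis th \<in> {u, -u, \<i>*u, -(\<i>*u)} \<and> a' = h (cis th) \<and> b' = h (\<i> * cis th)"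
proof -
  let ?d = "cis th"
  have hb: "h ?d \<le> a'" "h (\<i> * ?d) \<le> b'" using h_bound[OF assms] by auto
  have n: "norm ?d = 1" by simp
  note KA = Kfull(1)[OF n] and KP = Kfull(2)[OF n]
  have hp: "h ?d \<ge> 0" "h (\<i> * ?d) \<ge> 0" by (rule h_nonneg)+
  have prod: "h ?d * h (\<i> * ?d) \<le> a' * b'" using hb hp by (intro mult_mono) auto
  show "a*b \<le> a'*b'" using KA prod by linarith
  show "p+q \<le> a'+b'" using KP hb by linarith
  have abp: "a * b > 0" using pos by simp
  show "cis th \<in> {1, -1, \<i>, -\<i>} \<and> a' = h (cis th) \<and> b' = h (\<i> * cis th)" if "a'*b' \<le> a*b"
  proof -
    have e: "h ?d * h (\<i> * ?d) = a'*b'" using KA prod that by linarith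
    then have "h ?d * h (\<i> * ?d) \<le> a * b" using that by simp
    then have d: "?d \<in> {1, -1, \<i>, -\<i>}" using KA by blast
    have "h ?d * h (\<i> * ?d) > 0" using e that KA abp by linarith
    then have p1: "h ?d > 0" "h (\<i> * ?d) > 0" using hp by (auto simp: zero_less_mult_iff)
    have "a' = h ?d"
    proof (rule ccontr)
      assume "a' \<noteq> h ?d"
      then have "a' > h ?d" using hb by simp
      then have "a' * b' > h ?d * b'" using hb p1 by simp
      moreover have "h ?d * b' \<ge> h ?d * h (\<i> * ?d)" using hb p1 by simp
      ultimately show False using e by simp
    qed
    moreover have "b' = h (\<i> * ?d)"
    proof (rule ccontr)
      assume "b' \<noteq> h (\<i> * ?d)"
      then have "b' > h (\<i> * ?d)" using hb by simp
      then have "a' * b' > a' * h (\<i> * ?d)" using hb p1 by simp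
      moreover have "a' * h (\<i> * ?d) \<ge> h ?d * h (\<i> * ?d)" using hb p1 by simp
      ultimately show False using e by simp
    qed
    ultimately show ?thesis using d by blast
  qed
  show "cis th \<in> {u, -u, \<i>*u, -(\<i>*u)} \<and> a' = h (cis th) \<and> b' = h (\<i> * cis th)" if "a'+b' \<le> p+q"
  proof -
    have d: "?d \<in> {u, -u, \<i>*u, -(\<i>*u)}" using KP hb that by linarith
    have "a' = h ?d" "b' = h (\<i> * ?d)" using KP hb that by linarith+
    then show ?thesis using d by blast
  qed
qed

end

lemma ii: "\<i> * (\<i> * x) = - x" by (simp flip: mult.assoc)

context config begin

lemma setR:
  assumes R: "R = rect_set c th a' b'" "CC \<subseteq> R" "a' = h (cis th)" "b' = h (\<i> * cis th)"
  shows "R = {z. \<bar>z \<bullet> cis th\<bar> \<le> h (cis th)/2 \<and> \<bar>z \<bullet> (\<i> * cis th)\<bar> \<le> h (\<i> * cis th)/2}"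
proof -
  obtain v where v: "v \<in> {R2, T0, T1, R1}" "\<bar>2 * (v \<bullet> cis th)\<bar> = h (cis th)" using h_attained by blast
  obtain w where w: "w \<in> {R2, T0, T1, R1}" "\<bar>2 * (w \<bullet> (\<i> * cis th))\<bar> = h (\<i> * cis th)" using h_attained by blast
  have "v \<in> R" "- v \<in> R" "w \<in> R" "- w \<in> R" using pts_CC[OF v(1)] pts_CC[OF w(1)] R(2) by auto
  from rect_sym[OF R(1) this(1,2) _ this(3,4)] v(2) w(2) R(3,4) show ?thesis by simp
qed

lemma setA: "d \<in> {1, -1, \<i>, -\<i>} \<Longrightarrow>
  {z. \<bar>z \<bullet> d\<bar> \<le> h d/2 \<and> \<bar>z \<bullet> (\<i> * d)\<bar> \<le> h (\<i> * d)/2} = RA"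
  unfolding RA_eq by (elim insertE emptyE; simp add: inner_complex_def h_1 h_i h_neg; blast)

lemma setP: "d \<in> {u, -u, \<i>*u, -(\<i>*u)} \<Longrightarrow>
  {z. \<bar>z \<bullet> d\<bar> \<le> h d/2 \<and> \<bar>z \<bullet> (\<i> * d)\<bar> \<le> h (\<i> * d)/2} = RP"
  unfolding RP_eq by (elim insertE emptyE; simp add: h_u h_iu h_neg ii; blast)

lemma area_char:
  assumes R: "R = rect_set c th a' b'" "CC \<subseteq> R" "a'*b' \<le> a*b"
  shows "R = RA" "b' \<le> a' \<Longrightarrow> cis th \<in> {1, -1}"
proof -
  have E: "cis th \<in> {1, -1, \<i>, -\<i>}" "a' = h (cis th)" "b' = h (\<i> * cis th)"
    using enc_bounds(2)[of c th a' b'] R by auto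
  have S: "R = {z. \<bar>z \<bullet> cis th\<bar> \<le> h (cis th)/2 \<and> \<bar>z \<bullet> (\<i> * cis th)\<bar> \<le> h (\<i> * cis th)/2}"
    using setR[OF R(1,2) E(2,3)] .
  show "R = RA" unfolding S using setA[OF E(1)] .
  show "cis th \<in> {1, -1}" if "b' \<le> a'"
  proof (rule ccontr)
    assume "cis th \<notin> {1, -1}"
    then have "cis th = \<i> \<or> cis th = -\<i>" using E(1) by auto
    then have "a' = b" "b' = a" using E(2,3) by (auto simp: h_1 h_i h_neg)
    then show False using that ba by simp
  qed
qed

lemma per_char:
  assumes R: "R = rect_set c th a' b'" "CC \<subseteq> R" "a'+b' \<le> p+q"
  shows "R = RP" "b' \<le> a' \<Longrightarrow> cis th \<in> {\<i>*u, -(\<i>*u)}"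
proof -
  have E: "cis th \<in> {u, -u, \<i>*u, -(\<i>*u)}" "a' = h (cis th)" "b' = h (\<i> * cis th)"
    using enc_bounds(4)[of c th a' b'] R by auto
  have S: "R = {z. \<bar>z \<bullet> cis th\<bar> \<le> h (cis th)/2 \<and> \<bar>z \<bullet> (\<i> * cis th)\<bar> \<le> h (\<i> * cis th)/2}"
    using setR[OF R(1,2) E(2,3)] .
  show "R = RP" unfolding S using setP[OF E(1)] .
  show "cis th \<in> {\<i>*u, -(\<i>*u)}" if "b' \<le> a'"
  proof (rule ccontr)
    assume "cis th \<notin> {\<i>*u, -(\<i>*u)}"
    then have "cis th = u \<or> cis th = -u" using E(1) by auto
    then have "a' = p" "b' = q" using E(2,3) by (auto simp: h_u h_iu h_neg)
    then show False using that pq by simp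
  qed
qed

end

context config begin

lemma not_col: "\<not> collinear {R2, T0, -R2}"
proof
  assume col: "collinear {R2, T0, -R2}"
  have ne: "R2 - T0 \<noteq> 0"
  proof
    assume "R2 - T0 = 0"
    then have "R2 = T0" by simp
    then show False using cross by (simp add: mult.commute)
  qed
  have "collinear {0, R2 - T0, -R2 - T0}" using col collinear_3[of R2 T0 "-R2"] by (simp add: NO_MATCH_def)
  then have "(-R2 - T0) / (R2 - T0) \<in> \<real>" by (simp add: collinear_iff_Reals)
  then obtain r where r: "(-R2 - T0) / (R2 - T0) = of_real r" by (auto elim: Reals_cases)
  then have "-R2 - T0 = of_real r * (R2 - T0)" using ne by (simp add: field_simps)
  then have e1: "- Re R2 - Re T0 = r * (Re R2 - Re T0)" and e2: "- Im R2 - Im T0 = r * (Im R2 - Im T0)"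
    by (simp_all add: complex_eq_iff)
  have "Re R2 * Im T0 = Im R2 * Re T0" using e1 e2 by algebra
  then show False using cross by simp
qed

lemma interior_CC: "interior CC \<noteq> {}"
proof -
  have "\<not> affine_dependent {R2, T0, -R2}" and d: "R2 \<noteq> T0" "R2 \<noteq> -R2" "T0 \<noteq> -R2"
    using not_col collinear_3_eq_affine_dependent[of R2 T0 "-R2"] by auto
  moreover have "card {R2, T0, -R2} = Suc DIM(complex)" using d by simp
  ultimately have "interior (convex hull {R2, T0, -R2}) \<noteq> {}" using interior_convex_hull_eq_empty[of "{R2, T0, -R2}"] by simp
  moreover have "convex hull {R2, T0, -R2} \<subseteq> CC" unfolding CC_def pts_def by (rule hull_mono) auto
  ultimately show ?thesis using interior_mono by blast
qed

lemma poly_CC: "convex_polygon CC"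
  unfolding convex_polygon_def
proof (intro conjI)
  show "\<exists>P. finite P \<and> CC = convex hull P" by (rule exI[of _ pts]) (simp add: CC_def pts_def)
  show "interior CC \<noteq> {}" by (rule interior_CC)
qed

lemma RA_rect: "RA = rect_set (Complex (-a/2) (-b/2)) 0 a b" "rect_area RA = a * b"
  using rect_area_eq[of a b] pos unfolding RA_def by auto
lemma RP_rect: "RP = rect_set (- (of_real (p/2)) * u - of_real (q/2) * (\<i> * u)) \<delta> p q" "rect_perimeter RP = 2 * (p + q)"
  using rect_perimeter_eq[of p q] pos unfolding RP_def by auto

lemma enc_RA: "enclosing_rectangle CC RA"
  unfolding enclosing_rectangle_def is_rectangle_def using RA_rect(1) pos CC_RA by blast
lemma enc_RP: "enclosing_rectangle CC RP"
  unfolding enclosing_rectangle_def is_rectangle_def using RP_rect(1) pos CC_RP by blast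

lemma minA: "min_area_rect CC RA"
  unfolding min_area_rect_def
proof (intro conjI allI impI enc_RA)
  fix R' assume "enclosing_rectangle CC R'"
  then obtain c th a' b' where "0 < a'" "0 < b'" "R' = rect_set c th a' b'" "CC \<subseteq> R'"
    unfolding enclosing_rectangle_def is_rectangle_def by blast
  then show "rect_area RA \<le> rect_area R'" using RA_rect(2) rect_area_eq enc_bounds(1) by auto
qed

lemma minA_unique: "min_area_rect CC R \<Longrightarrow> R = RA"
proof -
  assume m: "min_area_rect CC R"
  then have "enclosing_rectangle CC R" "rect_area R \<le> rect_area RA" using enc_RA unfolding min_area_rect_def by auto
  then obtain c th a' b' where "0 < a'" "0 < b'" "R = rect_set c th a' b'" "CC \<subseteq> R" "rect_area R \<le> a * b"
    unfolding enclosing_rectangle_def is_rectangle_def RA_rect(2) by blast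
  then show "R = RA" using area_char(1) rect_area_eq by auto
qed

lemma minP: "min_perimeter_rect CC RP"
  unfolding min_perimeter_rect_def
proof (intro conjI allI impI enc_RP)
  fix R' assume "enclosing_rectangle CC R'"
  then obtain c th a' b' where "0 < a'" "0 < b'" "R' = rect_set c th a' b'" "CC \<subseteq> R'"
    unfolding enclosing_rectangle_def is_rectangle_def by blast
  moreover have "p + q \<le> a' + b'" using enc_bounds(3) calculation by auto
  ultimately show "rect_perimeter RP \<le> rect_perimeter R'" using RP_rect(2) rect_perimeter_eq by auto
qed

lemma minP_unique: "min_perimeter_rect CC R \<Longrightarrow> R = RP"
proof -
  assume m: "min_perimeter_rect CC R"
  then have "enclosing_rectangle CC R" "rect_perimeter R \<le> rect_perimeter RP" using enc_RP unfolding min_perimeter_rect_def by auto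
  then obtain c th a' b' where "0 < a'" "0 < b'" "R = rect_set c th a' b'" "CC \<subseteq> R" "rect_perimeter R \<le> 2 * (p + q)"
    unfolding enclosing_rectangle_def is_rectangle_def RP_rect(2) by blast
  then show "R = RP" using per_char(1) rect_perimeter_eq by auto
qed

lemma orientA: "rect_orientation RA dA \<Longrightarrow> dA \<in> {1, -1}"
proof -
  assume "rect_orientation RA dA"
  then obtain c th a' b' where h: "0 < b'" "b' \<le> a'" "RA = rect_set c th a' b'" "dA = cis th"
    unfolding rect_orientation_def by blast
  then have "a' * b' = a * b" using rect_area_eq[of a' b' c th] RA_rect(2) by simp
  then show ?thesis using area_char(2)[OF h(3) _ _ h(2)] CC_RA h by simp
qed

lemma orientP: "rect_orientation RP dP \<Longrightarrow> dP \<in> {\<i>*u, -(\<i>*u)}"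
proof -
  assume "rect_orientation RP dP"
  then obtain c th a' b' where h: "0 < b'" "b' \<le> a'" "RP = rect_set c th a' b'" "dP = cis th"
    unfolding rect_orientation_def by blast
  then have "a' + b' = p + q" using rect_perimeter_eq[of a' b' c th] RP_rect(2) by simp
  then show ?thesis using per_char(2)[OF h(3) _ _ h(2)] CC_RP h by simp
qed

lemma angle: "dA \<in> {1, -1} \<Longrightarrow> dP \<in> {\<i>*u, -(\<i>*u)} \<Longrightarrow> line_angle dA dP = pi/2 - \<delta>"
proof -
  assume "dA \<in> {1, -1}" "dP \<in> {\<i>*u, -(\<i>*u)}"
  then have "dA = 1 \<or> dA = -1" "dP = \<i>*u \<or> dP = -(\<i>*u)" by simp_all
  then have "\<bar>dA \<bullet> dP\<bar> = \<bar>1 \<bullet> (\<i>*u)\<bar>" by (elim disjE) (simp_all add: inner_minus_left inner_minus_right)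
  moreover have "1 \<bullet> (\<i>*u) = - S" by (simp add: inner_complex_def u_sel)
  ultimately have A1: "\<bar>dA \<bullet> dP\<bar> = S" using S_pos by simp
  have A2: "arccos S = pi/2 - \<delta>"
  proof -
    have "cos (pi/2 - \<delta>) = sin \<delta>" by (simp add: cos_diff)
    then have s: "S = cos (pi/2 - \<delta>)" using CS(2) by simp
    have "arccos (cos (pi/2 - \<delta>)) = pi/2 - \<delta>" using CS(3,4) by (intro arccos_cos) auto
    then show ?thesis using s by simp
  qed
  show ?thesis unfolding line_angle_def by (simp only: A1 A2)
qed

end

context config begin
theorem result:
  assumes "\<delta> < \<epsilon>"
  shows "\<exists>C RA RP. convex_polygon C \<and>
           min_area_rect C RA \<and> (\<forall>R. min_area_rect C R \<longrightarrow> R = RA) \<and>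
           min_perimeter_rect C RP \<and> (\<forall>R. min_perimeter_rect C R \<longrightarrow> R = RP) \<and>
           (\<forall>dA dP. rect_orientation RA dA \<and> rect_orientation RP dP \<longrightarrow>
              line_angle dA dP > pi / 2 - \<epsilon>)"
proof (rule exI[of _ CC], rule exI[of _ RA], rule exI[of _ RP], intro conjI allI impI)
  show "convex_polygon CC" by (rule poly_CC)
  show "min_area_rect CC RA" by (rule minA)
  show "min_perimeter_rect CC RP" by (rule minP)
  show "R = RA" if "min_area_rect CC R" for R using minA_unique that by blast
  show "R = RP" if "min_perimeter_rect CC R" for R using minP_unique that by blast
  fix dA dP assume "rect_orientation RA dA \<and> rect_orientation RP dP"
  then have "line_angle dA dP = pi/2 - \<delta>" using orientA orientP angle by blast
  then show "line_angle dA dP > pi / 2 - \<epsilon>" using assms by simp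
qed

end

definition "kD k = 1 + (k::real)^2"
definition "kC k = (1 - k^2) / kD k"
definition "kS k = 2*k / kD k"
definition "ka (k::real) = 1 + 3/2*k + 1/4*k^2"
definition "kp (k::real) = 1 + 1/2*k"
definition "kq (k::real) = 1 + k"
definition "kR2 k = Complex (ka k/2) ((kp k - ka k * kC k)/(2 * kS k))"
definition "kT0 k = Complex ((kC k - kq k)/(2 * kS k)) (1/2)"
definition "kT1 k = Complex ((kp k - kS k)/(2 * kC k)) (1/2)"
definition "kR1 k = Complex (ka k/2) ((ka k * kS k - kq k)/(2 * kC k))"
lemmas kdefs = kC_def kS_def ka_def kp_def kq_def kR2_def kT0_def kT1_def kR1_def

lemma kfacts:
  fixes k :: real
  assumes k: "0 < k" "k \<le> 1/10"
  shows "0 < kD k" "kD k \<noteq> 0" "0 < 1 - k^2" "1 - k^2 \<noteq> 0"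
    "k^2 \<le> k/10" "k^3 \<le> k^2/10" "k^4 \<le> k^3/10" "k^5 \<le> k^4/10" "k^6 \<le> k^5/10" "k^7 \<le> k^6/10"
    "k^8 \<le> k^7/10" "k^9 \<le> k^8/10" "k^10 \<le> k^9/10" "k^11 \<le> k^10/10" "k^12 \<le> k^11/10"
    "0 < k^2" "0 < k^3" "0 < k^4" "0 < k^5" "0 < k^6" "0 < k^7" "0 < k^8" "0 < k^9"
    "0 < k^10" "0 < k^11" "0 < k^12"
proof -
  have pw: "k^(n+1) \<le> k^n/10" for n
  proof -
    have "k * k^n \<le> (1/10) * k^n" using k by (intro mult_right_mono) auto
    then show ?thesis by (simp add: power_Suc2 mult.commute)
  qed
  show "k^2 \<le> k/10" "k^3 \<le> k^2/10" "k^4 \<le> k^3/10" "k^5 \<le> k^4/10" "k^6 \<le> k^5/10" "k^7 \<le> k^6/10"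
    "k^8 \<le> k^7/10" "k^9 \<le> k^8/10" "k^10 \<le> k^9/10" "k^11 \<le> k^10/10" "k^12 \<le> k^11/10"
    using pw[of 1] pw[of 2] pw[of 3] pw[of 4] pw[of 5] pw[of 6] pw[of 7] pw[of 8] pw[of 9] pw[of 10] pw[of 11]
    by (simp_all add: power2_eq_square)
  show "0 < k^2" "0 < k^3" "0 < k^4" "0 < k^5" "0 < k^6" "0 < k^7" "0 < k^8" "0 < k^9"
    "0 < k^10" "0 < k^11" "0 < k^12" using k by simp_all
  show "0 < kD k" "kD k \<noteq> 0" unfolding kD_def by (simp_all add: add_pos_nonneg) (smt (verit) zero_le_power2)
  have "k^2 \<le> k/10" using pw[of 1] by (simp add: power2_eq_square)
  then show "0 < 1 - k^2" "1 - k^2 \<noteq> 0" using k by linarith+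
qed

lemma c_N3: assumes "0 < k" "k \<le> 1/10" shows "0 \<le> ka k * kq k + kp k * 1 - 2 * ka k * 1 * kC k"
proof -
  note kf = kfacts[OF assms]
  have eq: "ka k * kq k + kp k * 1 - 2 * ka k * 1 * kC k = (21/4*k^2 + 25/4*k^3 + 9/4*k^4 + 1/4*k^5) / (kD k ^ 1)"
    using kf(1-4) assms unfolding kdefs
    apply (simp add: field_simps)
    unfolding kD_def apply (thin_tac _)+ by algebra
  have N: "0 \<le> (21/4*k^2 + 25/4*k^3 + 9/4*k^4 + 1/4*k^5::real)" using kf assms by linarith
  have Dp: "0 < (kD k ^ 1::real)" using kf assms by simp
  show ?thesis unfolding eq using N Dp by simp
qed

lemma c_N4: assumes "0 < k" "k \<le> 1/10" shows "0 \<le> kp k * ka k + 1 * kq k - 2 * ka k * 1 * kS k"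
proof -
  note kf = kfacts[OF assms]
  have eq: "kp k * ka k + 1 * kq k - 2 * ka k * 1 * kS k = (2 + (-1)*k + (-3)*k^2 + 17/8*k^3 + 1*k^4 + 1/8*k^5) / (kD k ^ 1)"
    using kf(1-4) assms unfolding kdefs
    apply (simp add: field_simps)
    unfolding kD_def apply (thin_tac _)+ by algebra
  have N: "0 \<le> (2 + (-1)*k + (-3)*k^2 + 17/8*k^3 + 1*k^4 + 1/8*k^5::real)" using kf assms by linarith
  have Dp: "0 < (kD k ^ 1::real)" using kf assms by simp
  show ?thesis unfolding eq using N Dp by simp
qed

lemma c_P1: assumes "0 < k" "k \<le> 1/10" shows "0 \<le> ka k + 1 - (kp k + kq k) * kC k"
proof -
  note kf = kfacts[OF assms]
  have eq: "ka k + 1 - (kp k + kq k) * kC k = (17/4*k^2 + 3*k^3 + 1/4*k^4) / (kD k ^ 1)"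
    using kf(1-4) assms unfolding kdefs
    apply (simp add: field_simps)
    unfolding kD_def apply (thin_tac _)+ by algebra
  have N: "0 \<le> (17/4*k^2 + 3*k^3 + 1/4*k^4::real)" using kf assms by linarith
  have Dp: "0 < (kD k ^ 1::real)" using kf assms by simp
  show ?thesis unfolding eq using N Dp by simp
qed

lemma c_P2: assumes "0 < k" "k \<le> 1/10" shows "0 \<le> ka k + 1 - (kp k + kq k) * kS k"
proof -
  note kf = kfacts[OF assms]
  have eq: "ka k + 1 - (kp k + kq k) * kS k = (2 + (-5/2)*k + (-3/4)*k^2 + 3/2*k^3 + 1/4*k^4) / (kD k ^ 1)"
    using kf(1-4) assms unfolding kdefs
    apply (simp add: field_simps)
    unfolding kD_def apply (thin_tac _)+ by algebra
  have N: "0 \<le> (2 + (-5/2)*k + (-3/4)*k^2 + 3/2*k^3 + 1/4*k^4::real)" using kf assms by linarith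
  have Dp: "0 < (kD k ^ 1::real)" using kf assms by simp
  show ?thesis unfolding eq using N Dp by simp
qed

lemma c_cross: assumes "0 < k" "k \<le> 1/10" shows "0 < Re (kR2 k) * Im (kT0 k) - Im (kR2 k) * Re (kT0 k)"
proof -
  note kf = kfacts[OF assms]
  have eq: "Re (kR2 k) * Im (kT0 k) - Im (kR2 k) * Re (kT0 k) = (3/16*k^2 + 23/64*k^3 + 23/32*k^4 + 35/32*k^5 + 33/32*k^6 + 9/8*k^7 + 21/32*k^8 + 13/32*k^9 + 5/32*k^10 + 1/64*k^11) / (kD k ^ 2 * k ^ 2)"
    using kf(1-4) assms unfolding kdefs
    apply (simp add: field_simps)
    unfolding kD_def apply (thin_tac _)+ by algebra
  have N: "0 < (3/16*k^2 + 23/64*k^3 + 23/32*k^4 + 35/32*k^5 + 33/32*k^6 + 9/8*k^7 + 21/32*k^8 + 13/32*k^9 + 5/32*k^10 + 1/64*k^11::real)" using kf assms by linarith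
  have Dp: "0 < (kD k ^ 2 * k ^ 2::real)" using kf assms by simp
  show ?thesis unfolding eq using N Dp by simp
qed

lemma c_R2rep: assumes "0 < k" "k \<le> 1/10" shows "ka k/2 - Re (kR2 k) = 0"
proof -
  note kf = kfacts[OF assms]
  have eq: "ka k/2 - Re (kR2 k) = (0) / (1)"
    using kf(1-4) assms unfolding kdefs
    by (simp add: field_simps)
  then show ?thesis by simp
qed

lemma c_R2rem: assumes "0 < k" "k \<le> 1/10" shows "0 \<le> ka k/2 + Re (kR2 k)"
proof -
  note kf = kfacts[OF assms]
  have eq: "ka k/2 + Re (kR2 k) = (1 + 3/2*k + 1/4*k^2) / (1)"
    using kf(1-4) assms unfolding kdefs
    by (simp add: field_simps)
  have N: "0 \<le> (1 + 3/2*k + 1/4*k^2::real)" using kf assms by linarith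
  have Dp: "0 < (1::real)" by simp
  show ?thesis unfolding eq using N Dp by simp
qed

lemma c_R2imp: assumes "0 < k" "k \<le> 1/10" shows "0 \<le> 1/2 - Im (kR2 k)"
proof -
  note kf = kfacts[OF assms]
  have eq: "1/2 - Im (kR2 k) = (3/4*k + (-7/16)*k^2 + 1/4*k^3 + (-1/2)*k^4 + (-1/2)*k^5 + (-1/16)*k^6) / (kD k ^ 1 * k ^ 1)"
    using kf(1-4) assms unfolding kdefs
    apply (simp add: field_simps)
    unfolding kD_def apply (thin_tac _)+ by algebra
  have N: "0 \<le> (3/4*k + (-7/16)*k^2 + 1/4*k^3 + (-1/2)*k^4 + (-1/2)*k^5 + (-1/16)*k^6::real)" using kf assms by linarith
  have Dp: "0 < (kD k ^ 1 * k ^ 1::real)" using kf assms by simp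
  show ?thesis unfolding eq using N Dp by simp
qed

lemma c_R2imm: assumes "0 < k" "k \<le> 1/10" shows "0 \<le> 1/2 + Im (kR2 k)"
proof -
  note kf = kfacts[OF assms]
  have eq: "1/2 + Im (kR2 k) = (1/4*k + 7/16*k^2 + 3/4*k^3 + 1/2*k^4 + 1/2*k^5 + 1/16*k^6) / (kD k ^ 1 * k ^ 1)"
    using kf(1-4) assms unfolding kdefs
    apply (simp add: field_simps)
    unfolding kD_def apply (thin_tac _)+ by algebra
  have N: "0 \<le> (1/4*k + 7/16*k^2 + 3/4*k^3 + 1/2*k^4 + 1/2*k^5 + 1/16*k^6::real)" using kf assms by linarith
  have Dp: "0 < (kD k ^ 1 * k ^ 1::real)" using kf assms by simp
  show ?thesis unfolding eq using N Dp by simp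
qed

lemma c_R2up: assumes "0 < k" "k \<le> 1/10" shows "kp k/2 - (Re (kR2 k) * kC k + Im (kR2 k) * kS k) = 0"
proof -
  note kf = kfacts[OF assms]
  have eq: "kp k/2 - (Re (kR2 k) * kC k + Im (kR2 k) * kS k) = (0) / (kD k ^ 2 * k ^ 1)"
    using kf(1-4) assms unfolding kdefs
    by (simp add: field_simps)
  then show ?thesis by simp
qed

lemma c_R2um: assumes "0 < k" "k \<le> 1/10" shows "0 \<le> kp k/2 + (Re (kR2 k) * kC k + Im (kR2 k) * kS k)"
proof -
  note kf = kfacts[OF assms]
  have eq: "kp k/2 + (Re (kR2 k) * kC k + Im (kR2 k) * kS k) = (1*k + 1/2*k^2 + 2*k^3 + 1*k^4 + 1*k^5 + 1/2*k^6) / (kD k ^ 2 * k ^ 1)"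
    using kf(1-4) assms unfolding kdefs
    apply (simp add: field_simps)
    unfolding kD_def apply (thin_tac _)+ by algebra
  have N: "0 \<le> (1*k + 1/2*k^2 + 2*k^3 + 1*k^4 + 1*k^5 + 1/2*k^6::real)" using kf assms by linarith
  have Dp: "0 < (kD k ^ 2 * k ^ 1::real)" using kf assms by simp
  show ?thesis unfolding eq using N Dp by simp
qed

lemma c_R2iup: assumes "0 < k" "k \<le> 1/10" shows "0 \<le> kq k/2 - (- Re (kR2 k) * kS k + Im (kR2 k) * kC k)"
proof -
  note kf = kfacts[OF assms]
  have eq: "kq k/2 - (- Re (kR2 k) * kS k + Im (kR2 k) * kC k) = (3/4*k + 17/16*k^2 + 2*k^3 + 35/16*k^4 + 7/4*k^5 + 19/16*k^6 + 1/2*k^7 + 1/16*k^8) / (kD k ^ 2 * k ^ 1)"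
    using kf(1-4) assms unfolding kdefs
    apply (simp add: field_simps)
    unfolding kD_def apply (thin_tac _)+ by algebra
  have N: "0 \<le> (3/4*k + 17/16*k^2 + 2*k^3 + 35/16*k^4 + 7/4*k^5 + 19/16*k^6 + 1/2*k^7 + 1/16*k^8::real)" using kf assms by linarith
  have Dp: "0 < (kD k ^ 2 * k ^ 1::real)" using kf assms by simp
  show ?thesis unfolding eq using N Dp by simp
qed

lemma c_R2ium: assumes "0 < k" "k \<le> 1/10" shows "0 \<le> kq k/2 + (- Re (kR2 k) * kS k + Im (kR2 k) * kC k)"
proof -
  note kf = kfacts[OF assms]
  have eq: "kq k/2 + (- Re (kR2 k) * kS k + Im (kR2 k) * kC k) = (1/4*k + (-1/16)*k^2 + (-3/16)*k^4 + (-3/4)*k^5 + (-3/16)*k^6 + (-1/2)*k^7 + (-1/16)*k^8) / (kD k ^ 2 * k ^ 1)"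
    using kf(1-4) assms unfolding kdefs
    apply (simp add: field_simps)
    unfolding kD_def apply (thin_tac _)+ by algebra
  have N: "0 \<le> (1/4*k + (-1/16)*k^2 + (-3/16)*k^4 + (-3/4)*k^5 + (-3/16)*k^6 + (-1/2)*k^7 + (-1/16)*k^8::real)" using kf assms by linarith
  have Dp: "0 < (kD k ^ 2 * k ^ 1::real)" using kf assms by simp
  show ?thesis unfolding eq using N Dp by simp
qed

lemma c_T0rep: assumes "0 < k" "k \<le> 1/10" shows "0 \<le> ka k/2 - Re (kT0 k)"
proof -
  note kf = kfacts[OF assms]
  have eq: "ka k/2 - Re (kT0 k) = (3/4*k + 5/4*k^2 + 9/8*k^3 + 5/4*k^4 + 3/8*k^5) / (kD k ^ 1 * k ^ 1)"
    using kf(1-4) assms unfolding kdefs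
    apply (simp add: field_simps)
    unfolding kD_def apply (thin_tac _)+ by algebra
  have N: "0 \<le> (3/4*k + 5/4*k^2 + 9/8*k^3 + 5/4*k^4 + 3/8*k^5::real)" using kf assms by linarith
  have Dp: "0 < (kD k ^ 1 * k ^ 1::real)" using kf assms by simp
  show ?thesis unfolding eq using N Dp by simp
qed

lemma c_T0rem: assumes "0 < k" "k \<le> 1/10" shows "0 \<le> ka k/2 + Re (kT0 k)"
proof -
  note kf = kfacts[OF assms]
  have eq: "ka k/2 + Re (kT0 k) = (1/4*k + 1/4*k^2 + 1/8*k^3 + 1/4*k^4 + (-1/8)*k^5) / (kD k ^ 1 * k ^ 1)"
    using kf(1-4) assms unfolding kdefs
    apply (simp add: field_simps)
    unfolding kD_def apply (thin_tac _)+ by algebra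
  have N: "0 \<le> (1/4*k + 1/4*k^2 + 1/8*k^3 + 1/4*k^4 + (-1/8)*k^5::real)" using kf assms by linarith
  have Dp: "0 < (kD k ^ 1 * k ^ 1::real)" using kf assms by simp
  show ?thesis unfolding eq using N Dp by simp
qed

lemma c_T0imp: assumes "0 < k" "k \<le> 1/10" shows "1/2 - Im (kT0 k) = 0"
proof -
  note kf = kfacts[OF assms]
  have eq: "1/2 - Im (kT0 k) = (0) / (1)"
    using kf(1-4) assms unfolding kdefs
    by (simp add: field_simps)
  then show ?thesis by simp
qed

lemma c_T0imm: assumes "0 < k" "k \<le> 1/10" shows "0 \<le> 1/2 + Im (kT0 k)"
proof -
  note kf = kfacts[OF assms]
  have eq: "1/2 + Im (kT0 k) = (1) / (1)"
    using kf(1-4) assms unfolding kdefs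
    by (simp add: field_simps)
  have N: "0 \<le> (1::real)" by simp
  have Dp: "0 < (1::real)" by simp
  show ?thesis unfolding eq using N Dp by simp
qed

lemma c_T0up: assumes "0 < k" "k \<le> 1/10" shows "0 \<le> kp k/2 - (Re (kT0 k) * kC k + Im (kT0 k) * kS k)"
proof -
  note kf = kfacts[OF assms]
  have eq: "kp k/2 - (Re (kT0 k) * kC k + Im (kT0 k) * kS k) = (3/4*k + (-1/4)*k^2 + 5/4*k^3 + (-1/2)*k^4 + 1/4*k^5 + (-1/4)*k^6 + (-1/4)*k^7) / (kD k ^ 2 * k ^ 1)"
    using kf(1-4) assms unfolding kdefs
    apply (simp add: field_simps)
    unfolding kD_def apply (thin_tac _)+ by algebra
  have N: "0 \<le> (3/4*k + (-1/4)*k^2 + 5/4*k^3 + (-1/2)*k^4 + 1/4*k^5 + (-1/4)*k^6 + (-1/4)*k^7::real)" using kf assms by linarith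
  have Dp: "0 < (kD k ^ 2 * k ^ 1::real)" using kf assms by simp
  show ?thesis unfolding eq using N Dp by simp
qed

lemma c_T0um: assumes "0 < k" "k \<le> 1/10" shows "0 \<le> kp k/2 + (Re (kT0 k) * kC k + Im (kT0 k) * kS k)"
proof -
  note kf = kfacts[OF assms]
  have eq: "kp k/2 + (Re (kT0 k) * kC k + Im (kT0 k) * kS k) = (1/4*k + 3/4*k^2 + 3/4*k^3 + 3/2*k^4 + 3/4*k^5 + 3/4*k^6 + 1/4*k^7) / (kD k ^ 2 * k ^ 1)"
    using kf(1-4) assms unfolding kdefs
    apply (simp add: field_simps)
    unfolding kD_def apply (thin_tac _)+ by algebra
  have N: "0 \<le> (1/4*k + 3/4*k^2 + 3/4*k^3 + 3/2*k^4 + 3/4*k^5 + 3/4*k^6 + 1/4*k^7::real)" using kf assms by linarith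
  have Dp: "0 < (kD k ^ 2 * k ^ 1::real)" using kf assms by simp
  show ?thesis unfolding eq using N Dp by simp
qed

lemma c_T0iup: assumes "0 < k" "k \<le> 1/10" shows "kq k/2 - (- Re (kT0 k) * kS k + Im (kT0 k) * kC k) = 0"
proof -
  note kf = kfacts[OF assms]
  have eq: "kq k/2 - (- Re (kT0 k) * kS k + Im (kT0 k) * kC k) = (0) / (kD k ^ 2 * k ^ 1)"
    using kf(1-4) assms unfolding kdefs
    by (simp add: field_simps)
  then show ?thesis by simp
qed

lemma c_T0ium: assumes "0 < k" "k \<le> 1/10" shows "0 \<le> kq k/2 + (- Re (kT0 k) * kS k + Im (kT0 k) * kC k)"
proof -
  note kf = kfacts[OF assms]
  have eq: "kq k/2 + (- Re (kT0 k) * kS k + Im (kT0 k) * kC k) = (1*k + 1*k^2 + 2*k^3 + 2*k^4 + 1*k^5 + 1*k^6) / (kD k ^ 2 * k ^ 1)"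
    using kf(1-4) assms unfolding kdefs
    apply (simp add: field_simps)
    unfolding kD_def apply (thin_tac _)+ by algebra
  have N: "0 \<le> (1*k + 1*k^2 + 2*k^3 + 2*k^4 + 1*k^5 + 1*k^6::real)" using kf assms by linarith
  have Dp: "0 < (kD k ^ 2 * k ^ 1::real)" using kf assms by simp
  show ?thesis unfolding eq using N Dp by simp
qed

lemma c_T1rep: assumes "0 < k" "k \<le> 1/10" shows "0 \<le> ka k/2 - Re (kT1 k)"
proof -
  note kf = kfacts[OF assms]
  have eq: "ka k/2 - Re (kT1 k) = (3/2*k + (-7/8)*k^2 + 1/2*k^3 + (-1)*k^4 + (-1)*k^5 + (-1/8)*k^6) / (kD k ^ 1 * (1 - k^2) ^ 1)"
    using kf(1-4) assms unfolding kdefs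
    apply (simp add: field_simps)
    unfolding kD_def apply (thin_tac _)+ by algebra
  have N: "0 \<le> (3/2*k + (-7/8)*k^2 + 1/2*k^3 + (-1)*k^4 + (-1)*k^5 + (-1/8)*k^6::real)" using kf assms by linarith
  have Dp: "0 < (kD k ^ 1 * (1 - k^2) ^ 1::real)" using kf assms by simp
  show ?thesis unfolding eq using N Dp by simp
qed

lemma c_T1rem: assumes "0 < k" "k \<le> 1/10" shows "0 \<le> ka k/2 + Re (kT1 k)"
proof -
  note kf = kfacts[OF assms]
  have eq: "ka k/2 + Re (kT1 k) = (1 + 9/8*k^2 + (-1/2)*k^3 + (-1/2)*k^5 + (-1/8)*k^6) / (kD k ^ 1 * (1 - k^2) ^ 1)"
    using kf(1-4) assms unfolding kdefs
    apply (simp add: field_simps)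
    unfolding kD_def apply (thin_tac _)+ by algebra
  have N: "0 \<le> (1 + 9/8*k^2 + (-1/2)*k^3 + (-1/2)*k^5 + (-1/8)*k^6::real)" using kf assms by linarith
  have Dp: "0 < (kD k ^ 1 * (1 - k^2) ^ 1::real)" using kf assms by simp
  show ?thesis unfolding eq using N Dp by simp
qed

lemma c_T1imp: assumes "0 < k" "k \<le> 1/10" shows "1/2 - Im (kT1 k) = 0"
proof -
  note kf = kfacts[OF assms]
  have eq: "1/2 - Im (kT1 k) = (0) / (1)"
    using kf(1-4) assms unfolding kdefs
    by (simp add: field_simps)
  then show ?thesis by simp
qed

lemma c_T1imm: assumes "0 < k" "k \<le> 1/10" shows "0 \<le> 1/2 + Im (kT1 k)"
proof -
  note kf = kfacts[OF assms]
  have eq: "1/2 + Im (kT1 k) = (1) / (1)"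
    using kf(1-4) assms unfolding kdefs
    by (simp add: field_simps)
  have N: "0 \<le> (1::real)" by simp
  have Dp: "0 < (1::real)" by simp
  show ?thesis unfolding eq using N Dp by simp
qed

lemma c_T1up: assumes "0 < k" "k \<le> 1/10" shows "kp k/2 - (Re (kT1 k) * kC k + Im (kT1 k) * kS k) = 0"
proof -
  note kf = kfacts[OF assms]
  have eq: "kp k/2 - (Re (kT1 k) * kC k + Im (kT1 k) * kS k) = (0) / (kD k ^ 2 * (1 - k^2) ^ 1)"
    using kf(1-4) assms unfolding kdefs
    by (simp add: field_simps)
  then show ?thesis by simp
qed

lemma c_T1um: assumes "0 < k" "k \<le> 1/10" shows "0 \<le> kp k/2 + (Re (kT1 k) * kC k + Im (kT1 k) * kS k)"
proof -
  note kf = kfacts[OF assms]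
  have eq: "kp k/2 + (Re (kT1 k) * kC k + Im (kT1 k) * kS k) = (1 + 1/2*k + 1*k^2 + 1/2*k^3 + (-1)*k^4 + (-1/2)*k^5 + (-1)*k^6 + (-1/2)*k^7) / (kD k ^ 2 * (1 - k^2) ^ 1)"
    using kf(1-4) assms unfolding kdefs
    apply (simp add: field_simps)
    unfolding kD_def apply (thin_tac _)+ by algebra
  have N: "0 \<le> (1 + 1/2*k + 1*k^2 + 1/2*k^3 + (-1)*k^4 + (-1/2)*k^5 + (-1)*k^6 + (-1/2)*k^7::real)" using kf assms by linarith
  have Dp: "0 < (kD k ^ 2 * (1 - k^2) ^ 1::real)" using kf assms by simp
  show ?thesis unfolding eq using N Dp by simp
qed

lemma c_T1iup: assumes "0 < k" "k \<le> 1/10" shows "0 \<le> kq k/2 - (- Re (kT1 k) * kS k + Im (kT1 k) * kC k)"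
proof -
  note kf = kfacts[OF assms]
  have eq: "kq k/2 - (- Re (kT1 k) * kS k + Im (kT1 k) * kC k) = (3/2*k + (-1/2)*k^2 + 5/2*k^3 + (-1)*k^4 + 1/2*k^5 + (-1/2)*k^6 + (-1/2)*k^7) / (kD k ^ 2 * (1 - k^2) ^ 1)"
    using kf(1-4) assms unfolding kdefs
    apply (simp add: field_simps)
    unfolding kD_def apply (thin_tac _)+ by algebra
  have N: "0 \<le> (3/2*k + (-1/2)*k^2 + 5/2*k^3 + (-1)*k^4 + 1/2*k^5 + (-1/2)*k^6 + (-1/2)*k^7::real)" using kf assms by linarith
  have Dp: "0 < (kD k ^ 2 * (1 - k^2) ^ 1::real)" using kf assms by simp
  show ?thesis unfolding eq using N Dp by simp
qed

lemma c_T1ium: assumes "0 < k" "k \<le> 1/10" shows "0 \<le> kq k/2 + (- Re (kT1 k) * kS k + Im (kT1 k) * kC k)"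
proof -
  note kf = kfacts[OF assms]
  have eq: "kq k/2 + (- Re (kT1 k) * kS k + Im (kT1 k) * kC k) = (1 + (-1/2)*k + 3/2*k^2 + (-3/2)*k^3 + (-3/2)*k^5 + (-1/2)*k^6 + (-1/2)*k^7) / (kD k ^ 2 * (1 - k^2) ^ 1)"
    using kf(1-4) assms unfolding kdefs
    apply (simp add: field_simps)
    unfolding kD_def apply (thin_tac _)+ by algebra
  have N: "0 \<le> (1 + (-1/2)*k + 3/2*k^2 + (-3/2)*k^3 + (-3/2)*k^5 + (-1/2)*k^6 + (-1/2)*k^7::real)" using kf assms by linarith
  have Dp: "0 < (kD k ^ 2 * (1 - k^2) ^ 1::real)" using kf assms by simp
  show ?thesis unfolding eq using N Dp by simp
qed

lemma c_R1rep: assumes "0 < k" "k \<le> 1/10" shows "ka k/2 - Re (kR1 k) = 0"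
proof -
  note kf = kfacts[OF assms]
  have eq: "ka k/2 - Re (kR1 k) = (0) / (1)"
    using kf(1-4) assms unfolding kdefs
    by (simp add: field_simps)
  then show ?thesis by simp
qed

lemma c_R1rem: assumes "0 < k" "k \<le> 1/10" shows "0 \<le> ka k/2 + Re (kR1 k)"
proof -
  note kf = kfacts[OF assms]
  have eq: "ka k/2 + Re (kR1 k) = (1 + 3/2*k + 1/4*k^2) / (1)"
    using kf(1-4) assms unfolding kdefs
    by (simp add: field_simps)
  have N: "0 \<le> (1 + 3/2*k + 1/4*k^2::real)" using kf assms by linarith
  have Dp: "0 < (1::real)" by simp
  show ?thesis unfolding eq using N Dp by simp
qed

lemma c_R1imp: assumes "0 < k" "k \<le> 1/10" shows "0 \<le> 1/2 - Im (kR1 k)"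
proof -
  note kf = kfacts[OF assms]
  have eq: "1/2 - Im (kR1 k) = (1 + (-1/2)*k + (-1/2)*k^2 + (-1/4)*k^3 + (-3/2)*k^4 + 1/4*k^5) / (kD k ^ 1 * (1 - k^2) ^ 1)"
    using kf(1-4) assms unfolding kdefs
    apply (simp add: field_simps)
    unfolding kD_def apply (thin_tac _)+ by algebra
  have N: "0 \<le> (1 + (-1/2)*k + (-1/2)*k^2 + (-1/4)*k^3 + (-3/2)*k^4 + 1/4*k^5::real)" using kf assms by linarith
  have Dp: "0 < (kD k ^ 1 * (1 - k^2) ^ 1::real)" using kf assms by simp
  show ?thesis unfolding eq using N Dp by simp
qed

lemma c_R1imm: assumes "0 < k" "k \<le> 1/10" shows "0 \<le> 1/2 + Im (kR1 k)"
proof -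
  note kf = kfacts[OF assms]
  have eq: "1/2 + Im (kR1 k) = (1/2*k + 1/2*k^2 + 1/4*k^3 + 1/2*k^4 + (-1/4)*k^5) / (kD k ^ 1 * (1 - k^2) ^ 1)"
    using kf(1-4) assms unfolding kdefs
    apply (simp add: field_simps)
    unfolding kD_def apply (thin_tac _)+ by algebra
  have N: "0 \<le> (1/2*k + 1/2*k^2 + 1/4*k^3 + 1/2*k^4 + (-1/4)*k^5::real)" using kf assms by linarith
  have Dp: "0 < (kD k ^ 1 * (1 - k^2) ^ 1::real)" using kf assms by simp
  show ?thesis unfolding eq using N Dp by simp
qed

lemma c_R1up: assumes "0 < k" "k \<le> 1/10" shows "0 \<le> kp k/2 - (Re (kR1 k) * kC k + Im (kR1 k) * kS k)"
proof -
  note kf = kfacts[OF assms]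
  have eq: "kp k/2 - (Re (kR1 k) * kC k + Im (kR1 k) * kS k) = (1/2*k + (-1/8)*k^2 + (-3/8)*k^4 + (-3/2)*k^5 + (-3/8)*k^6 + (-1)*k^7 + (-1/8)*k^8) / (kD k ^ 2 * (1 - k^2) ^ 1)"
    using kf(1-4) assms unfolding kdefs
    apply (simp add: field_simps)
    unfolding kD_def apply (thin_tac _)+ by algebra
  have N: "0 \<le> (1/2*k + (-1/8)*k^2 + (-3/8)*k^4 + (-3/2)*k^5 + (-3/8)*k^6 + (-1)*k^7 + (-1/8)*k^8::real)" using kf assms by linarith
  have Dp: "0 < (kD k ^ 2 * (1 - k^2) ^ 1::real)" using kf assms by simp
  show ?thesis unfolding eq using N Dp by simp
qed

lemma c_R1um: assumes "0 < k" "k \<le> 1/10" shows "0 \<le> kp k/2 + (Re (kR1 k) * kC k + Im (kR1 k) * kS k)"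
proof -
  note kf = kfacts[OF assms]
  have eq: "kp k/2 + (Re (kR1 k) * kC k + Im (kR1 k) * kS k) = (1 + 9/8*k^2 + 1/2*k^3 + (-5/8)*k^4 + 1*k^5 + (-5/8)*k^6 + 1/2*k^7 + 1/8*k^8) / (kD k ^ 2 * (1 - k^2) ^ 1)"
    using kf(1-4) assms unfolding kdefs
    apply (simp add: field_simps)
    unfolding kD_def apply (thin_tac _)+ by algebra
  have N: "0 \<le> (1 + 9/8*k^2 + 1/2*k^3 + (-5/8)*k^4 + 1*k^5 + (-5/8)*k^6 + 1/2*k^7 + 1/8*k^8::real)" using kf assms by linarith
  have Dp: "0 < (kD k ^ 2 * (1 - k^2) ^ 1::real)" using kf assms by simp
  show ?thesis unfolding eq using N Dp by simp
qed

lemma c_R1iup: assumes "0 < k" "k \<le> 1/10" shows "0 \<le> kq k/2 - (- Re (kR1 k) * kS k + Im (kR1 k) * kC k)"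
proof -
  note kf = kfacts[OF assms]
  have eq: "kq k/2 - (- Re (kR1 k) * kS k + Im (kR1 k) * kC k) = (1 + 1*k + 1*k^2 + 1*k^3 + (-1)*k^4 + (-1)*k^5 + (-1)*k^6 + (-1)*k^7) / (kD k ^ 2 * (1 - k^2) ^ 1)"
    using kf(1-4) assms unfolding kdefs
    apply (simp add: field_simps)
    unfolding kD_def apply (thin_tac _)+ by algebra
  have N: "0 \<le> (1 + 1*k + 1*k^2 + 1*k^3 + (-1)*k^4 + (-1)*k^5 + (-1)*k^6 + (-1)*k^7::real)" using kf assms by linarith
  have Dp: "0 < (kD k ^ 2 * (1 - k^2) ^ 1::real)" using kf assms by simp
  show ?thesis unfolding eq using N Dp by simp
qed

lemma c_R1ium: assumes "0 < k" "k \<le> 1/10" shows "kq k/2 + (- Re (kR1 k) * kS k + Im (kR1 k) * kC k) = 0"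
proof -
  note kf = kfacts[OF assms]
  have eq: "kq k/2 + (- Re (kR1 k) * kS k + Im (kR1 k) * kC k) = (0) / (kD k ^ 2 * (1 - k^2) ^ 1)"
    using kf(1-4) assms unfolding kdefs
    by (simp add: field_simps)
  then show ?thesis by simp
qed

lemma absI: "0 \<le> y - x \<Longrightarrow> 0 \<le> y + x \<Longrightarrow> \<bar>x\<bar> \<le> (y::real)" by linarith

lemma M_all:
  assumes k: "0 < k" "k \<le> 1/10" and v: "v \<in> {kR2 k, kT0 k, kT1 k, kR1 k}"
  shows "\<bar>Re v\<bar> \<le> ka k/2 \<and> \<bar>Im v\<bar> \<le> 1/2 \<and>
    \<bar>Re v * kC k + Im v * kS k\<bar> \<le> kp k/2 \<and> \<bar>- Re v * kS k + Im v * kC k\<bar> \<le> kq k/2"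
proof -
  have R2: "\<bar>Re (kR2 k)\<bar> \<le> ka k/2 \<and> \<bar>Im (kR2 k)\<bar> \<le> 1/2 \<and>
    \<bar>Re (kR2 k) * kC k + Im (kR2 k) * kS k\<bar> \<le> kp k/2 \<and> \<bar>- Re (kR2 k) * kS k + Im (kR2 k) * kC k\<bar> \<le> kq k/2"
    using c_R2rep[OF k] c_R2rem[OF k] c_R2imp[OF k] c_R2imm[OF k] c_R2up[OF k] c_R2um[OF k] c_R2iup[OF k] c_R2ium[OF k]
    by (intro conjI absI) simp_all
  have T0: "\<bar>Re (kT0 k)\<bar> \<le> ka k/2 \<and> \<bar>Im (kT0 k)\<bar> \<le> 1/2 \<and>
    \<bar>Re (kT0 k) * kC k + Im (kT0 k) * kS k\<bar> \<le> kp k/2 \<and> \<bar>- Re (kT0 k) * kS k + Im (kT0 k) * kC k\<bar> \<le> kq k/2"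
    using c_T0rep[OF k] c_T0rem[OF k] c_T0imp[OF k] c_T0imm[OF k] c_T0up[OF k] c_T0um[OF k] c_T0iup[OF k] c_T0ium[OF k]
    by (intro conjI absI) simp_all
  have T1: "\<bar>Re (kT1 k)\<bar> \<le> ka k/2 \<and> \<bar>Im (kT1 k)\<bar> \<le> 1/2 \<and>
    \<bar>Re (kT1 k) * kC k + Im (kT1 k) * kS k\<bar> \<le> kp k/2 \<and> \<bar>- Re (kT1 k) * kS k + Im (kT1 k) * kC k\<bar> \<le> kq k/2"
    using c_T1rep[OF k] c_T1rem[OF k] c_T1imp[OF k] c_T1imm[OF k] c_T1up[OF k] c_T1um[OF k] c_T1iup[OF k] c_T1ium[OF k]
    by (intro conjI absI) simp_all
  have R1: "\<bar>Re (kR1 k)\<bar> \<le> ka k/2 \<and> \<bar>Im (kR1 k)\<bar> \<le> 1/2 \<and>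
    \<bar>Re (kR1 k) * kC k + Im (kR1 k) * kS k\<bar> \<le> kp k/2 \<and> \<bar>- Re (kR1 k) * kS k + Im (kR1 k) * kC k\<bar> \<le> kq k/2"
    using c_R1rep[OF k] c_R1rem[OF k] c_R1imp[OF k] c_R1imm[OF k] c_R1up[OF k] c_R1um[OF k] c_R1iup[OF k] c_R1ium[OF k]
    by (intro conjI absI) simp_all
  from v show ?thesis using R2 T0 T1 R1 by blast
qed

lemma inst:
  assumes k: "0 < k" "k \<le> 1/10" and d: "kC k = cos \<delta>" "kS k = sin \<delta>" "0 < \<delta>" "\<delta> < pi/2"
  shows "config (ka k) 1 (kp k) (kq k) (kC k) (kS k) \<delta> (kR2 k) (kT0 k) (kT1 k) (kR1 k)"
proof unfold_locales
  have k2: "0 < k^2" using k by simp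
  have e1: "kp k * kq k - ka k * 1 = k^2/4" "ka k + 1 - (kp k + kq k) = k^2/4"
    unfolding ka_def kp_def kq_def by (simp_all add: algebra_simps power2_eq_square)
  show "0 < ka k" unfolding ka_def using k k2 by linarith
  show "0 < (1::real)" by simp
  show "0 < kp k" unfolding kp_def using k by linarith
  show "0 < kq k" unfolding kq_def using k by linarith
  show "ka k * 1 < kp k * kq k" using e1 k2 by linarith
  show "kp k + kq k < ka k + 1" using e1 k2 by linarith
  show "1 < ka k" unfolding ka_def using k k2 by linarith
  show "kp k < kq k" unfolding kp_def kq_def using k by linarith
  show "2 * ka k * 1 * kC k \<le> ka k * kq k + kp k * 1" using c_N3[OF k] by linarith
  show "2 * ka k * 1 * kS k \<le> kp k * ka k + 1 * kq k" using c_N4[OF k] by linarith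
  show "(kp k + kq k) * kC k \<le> ka k + 1" using c_P1[OF k] by linarith
  show "(kp k + kq k) * kS k \<le> ka k + 1" using c_P2[OF k] by linarith
  show "kC k = cos \<delta>" "kS k = sin \<delta>" "0 < \<delta>" "\<delta> < pi/2" by (rule d)+
  show "Re (kR2 k) = ka k / 2" using c_R2rep[OF k] by linarith
  show "Re (kR2 k) * kC k + Im (kR2 k) * kS k = kp k / 2" using c_R2up[OF k] by linarith
  show "Im (kT0 k) = 1 / 2" using c_T0imp[OF k] by linarith
  show "- Re (kT0 k) * kS k + Im (kT0 k) * kC k = kq k / 2" using c_T0iup[OF k] by linarith
  show "Im (kT1 k) = 1 / 2" using c_T1imp[OF k] by linarith
  show "Re (kT1 k) * kC k + Im (kT1 k) * kS k = kp k / 2" using c_T1up[OF k] by linarith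
  show "Re (kR1 k) = ka k / 2" using c_R1rep[OF k] by linarith
  show "- Re (kR1 k) * kS k + Im (kR1 k) * kC k = - kq k / 2" using c_R1ium[OF k] by linarith
  show "\<And>v. v \<in> {kR2 k, kT0 k, kT1 k, kR1 k} \<Longrightarrow> \<bar>Re v\<bar> \<le> ka k/2 \<and> \<bar>Im v\<bar> \<le> 1/2 \<and>
    \<bar>Re v * kC k + Im v * kS k\<bar> \<le> kp k/2 \<and> \<bar>- Re v * kS k + Im v * kC k\<bar> \<le> kq k/2"
    using M_all[OF k] by blast
  show "Im (kR2 k) * Re (kT0 k) < Re (kR2 k) * Im (kT0 k)" using c_cross[OF k] by linarith
qed

theorem mainTheorem1:
  fixes \<epsilon> :: real
  assumes "\<epsilon> > 0"
  shows "\<exists>C RA RP. convex_polygon C \<and>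
           min_area_rect C RA \<and> (\<forall>R. min_area_rect C R \<longrightarrow> R = RA) \<and>
           min_perimeter_rect C RP \<and> (\<forall>R. min_perimeter_rect C R \<longrightarrow> R = RP) \<and>
           (\<forall>dA dP. rect_orientation RA dA \<and> rect_orientation RP dP \<longrightarrow>
              line_angle dA dP > pi / 2 - \<epsilon>)"
proof -
  define e' where "e' = min \<epsilon> 1 / 2"
  have e1: "0 < e'" "e' < \<epsilon>" "e' \<le> 1/2" using assms unfolding e'_def by auto
  have pi3: "3 < pi" by (rule pi_gt3)
  have se: "0 < sin e'" using e1 pi3 by (intro sin_gt_zero) auto
  define k where "k = min (1/10) (sin e' / 2)"
  have k: "0 < k" "k \<le> 1/10" "2 * k \<le> sin e'" using se unfolding k_def by auto
  note kf = kfacts[OF k(1,2)]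
  have CS1: "(kC k)^2 + (kS k)^2 = 1"
    unfolding kC_def kS_def using kf(1,2) apply (simp add: field_simps)
    unfolding kD_def apply (thin_tac _)+ by algebra
  have Cp: "0 < kC k" unfolding kC_def using kf by simp
  have Sp: "0 < kS k" unfolding kS_def using kf k by simp
  obtain \<delta> where d: "0 \<le> \<delta>" "\<delta> \<le> pi/2" "kC k = cos \<delta>" "kS k = sin \<delta>"
    using sincos_total_pi_half[OF less_imp_le[OF Cp] less_imp_le[OF Sp] CS1] by blast
  have d0: "0 < \<delta>"
  proof (rule ccontr)
    assume "\<not> 0 < \<delta>"
    then have "\<delta> = 0" using d by simp
    then show False using d Sp by simp
  qed
  have d1: "\<delta> < pi/2"
  proof (rule ccontr)
    assume "\<not> \<delta> < pi/2"
    then have "\<delta> = pi/2" using d by simp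
    then have "cos \<delta> = 0" using cos_pi_half by (simp only:)
    then show False using d(3) Cp by simp
  qed
  have "kS k \<le> 2 * k"
  proof -
    have "1 \<le> kD k" unfolding kD_def by simp
    then have "2 * k / kD k \<le> 2 * k / 1" using k by (intro divide_left_mono) auto
    then show ?thesis unfolding kS_def by simp
  qed
  then have Sle: "kS k \<le> sin e'" using k by linarith
  have "\<delta> = arcsin (kS k)" using d d0 by (simp add: arcsin_sin)
  also have "\<dots> \<le> arcsin (sin e')"
  proof -
    have "kS k \<le> 1" using Sle sin_le_one[of e'] by linarith
    then have "\<bar>kS k\<bar> \<le> 1" using Sp by simp
    then show ?thesis using arcsin_le_mono[of "kS k" "sin e'"] abs_sin_le_one[of e'] Sle by simp
  qed
  also have "\<dots> = e'" using e1 pi3 by (intro arcsin_sin) auto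
  finally have "\<delta> < \<epsilon>" using e1 by simp
  interpret config "ka k" 1 "kp k" "kq k" "kC k" "kS k" \<delta> "kR2 k" "kT0 k" "kT1 k" "kR1 k"
    by (rule inst[OF k(1,2) d(3,4) d0 d1])
  show ?thesis by (rule result[OF \<open>\<delta> < \<epsilon>\<close>])
qed

end
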